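(* Let $\mathcal V$ be the self-attention velocity field. There exists $L_1=L_1(M,R)$, independent of $d$, such that $D_x\mathcal V$ is bounded in operator norm by $L_1$ and, for all $x,\tilde x\in B_R(0)$, all $\mu,\tilde\mu\in\mathcal P(\mathbb R^d)$ supported in $B_R(0)$, and all $\theta,\tilde\theta$ with $|\theta|,|\tilde\theta|\le M$, $$\|D_x\mathcal V(x,\mu;\theta)-D_x\mathcal V(\tilde x,\tilde\mu;\tilde\theta)\|\le L_1\big(|x-\tilde x|+\mathbf W_1(\mu,\tilde\mu)+|\theta-\tilde\theta|\big).$$
   Context: Self-attention velocity field: for $\theta=(Q,K,V)\in(\mathbb R^{d\times d})^3\cong\mathbb R^{3d^2}$ with $|\theta|$ the Euclidean (Frobenius) norm of the concatenation, $\mathcal V(x,\mu;\theta)=\frac{1}{Z(x)}\int_{\mathbb R^d}e^{\langle Qx,Ky\rangle}Vy\,d\mu(y)$ with $Z(x)=\int_{\mathbb R^d}e^{\langle Qx,Kz\rangle}\,d\mu(z)$. $B_r(0)$ is the Euclidean ball of radius $r$ in $\mathbb R^d$; $\mathbf W_1$ is the 1-Wasserstein distance; $\|\cdot\|$ is the operator norm; $D_x\mathcal V$ is the $d\times d$ Jacobian of $\mathcal V$ in $x$. *)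

theory Defs
  imports "HOL-Probability.Probability"
begin

text \<open>Explicit-dimension model of R^d (d is quantified inside the statement, so that the
constant can be independent of d). Points of R^d are the extensional functions
{..<d} -> real, i.e. the carrier of the product measure space PiM {..<d} (\<lambda>_. borel).
Matrices are functions nat => nat => real, only entries with indices < d being relevant.\<close>

definition vecs :: "nat \<Rightarrow> (nat \<Rightarrow> real) set" where
  "vecs d = PiE {..<d} (\<lambda>_. UNIV)"

definition Rd :: "nat \<Rightarrow> (nat \<Rightarrow> real) measure" where
  "Rd d = PiM {..<d} (\<lambda>_. borel)"

definition vinner :: "nat \<Rightarrow> (nat \<Rightarrow> real) \<Rightarrow> (nat \<Rightarrow> real) \<Rightarrow> real" where
  "vinner d x y = (\<Sum>i<d. x i * y i)"

definition vnorm :: "nat \<Rightarrow> (nat \<Rightarrow> real) \<Rightarrow> real" where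
  "vnorm d x = sqrt (\<Sum>i<d. (x i)\<^sup>2)"

definition vdist :: "nat \<Rightarrow> (nat \<Rightarrow> real) \<Rightarrow> (nat \<Rightarrow> real) \<Rightarrow> real" where
  "vdist d x y = sqrt (\<Sum>i<d. (x i - y i)\<^sup>2)"

definition mvmul :: "nat \<Rightarrow> (nat \<Rightarrow> nat \<Rightarrow> real) \<Rightarrow> (nat \<Rightarrow> real) \<Rightarrow> (nat \<Rightarrow> real)" where
  "mvmul d A v = (\<lambda>i\<in>{..<d}. \<Sum>j<d. A i j * v j)"

definition opnorm :: "nat \<Rightarrow> (nat \<Rightarrow> nat \<Rightarrow> real) \<Rightarrow> real" where
  "opnorm d A = Sup {vnorm d (mvmul d A v) | v. v \<in> vecs d \<and> vnorm d v \<le> 1}"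

type_synonym params = "(nat \<Rightarrow> nat \<Rightarrow> real) \<times> (nat \<Rightarrow> nat \<Rightarrow> real) \<times> (nat \<Rightarrow> nat \<Rightarrow> real)"

definition pdist :: "nat \<Rightarrow> params \<Rightarrow> params \<Rightarrow> real" where
  "pdist d \<theta> \<theta>' = (case (\<theta>, \<theta>') of ((Q,K,V), (Q',K',V')) \<Rightarrow>
     sqrt (\<Sum>i<d. \<Sum>j<d. (Q i j - Q' i j)\<^sup>2 + (K i j - K' i j)\<^sup>2 + (V i j - V' i j)\<^sup>2))"

definition pnorm :: "nat \<Rightarrow> params \<Rightarrow> real" where
  "pnorm d \<theta> = pdist d \<theta> (\<lambda>_ _. 0, \<lambda>_ _. 0, \<lambda>_ _. 0)"

definition prob_supp :: "nat \<Rightarrow> real \<Rightarrow> (nat \<Rightarrow> real) measure \<Rightarrow> bool" where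
  "prob_supp d R \<mu> \<longleftrightarrow> prob_space \<mu> \<and> sets \<mu> = sets (Rd d) \<and>
     emeasure \<mu> {y \<in> space (Rd d). R < vnorm d y} = 0"

definition couplings :: "nat \<Rightarrow> (nat \<Rightarrow> real) measure \<Rightarrow> (nat \<Rightarrow> real) measure
    \<Rightarrow> ((nat \<Rightarrow> real) \<times> (nat \<Rightarrow> real)) measure set" where
  "couplings d \<mu> \<nu> = {\<pi>. prob_space \<pi> \<and> sets \<pi> = sets (Rd d \<Otimes>\<^sub>M Rd d) \<and>
     distr \<pi> (Rd d) fst = \<mu> \<and> distr \<pi> (Rd d) snd = \<nu>}"

definition W1 :: "nat \<Rightarrow> (nat \<Rightarrow> real) measure \<Rightarrow> (nat \<Rightarrow> real) measure \<Rightarrow> real" where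
  "W1 d \<mu> \<nu> = enn2real (INF \<pi>\<in>couplings d \<mu> \<nu>. \<integral>\<^sup>+ p. ennreal (vdist d (fst p) (snd p)) \<partial>\<pi>)"

definition attn :: "nat \<Rightarrow> (nat \<Rightarrow> real) \<Rightarrow> (nat \<Rightarrow> real) measure \<Rightarrow> params \<Rightarrow> (nat \<Rightarrow> real)" where
  "attn d x \<mu> \<theta> = (case \<theta> of (Q,K,V) \<Rightarrow>
     (\<lambda>i\<in>{..<d}.
        (\<integral>y. exp (vinner d (mvmul d Q x) (mvmul d K y)) * mvmul d V y i \<partial>\<mu>)
        / (\<integral>z. exp (vinner d (mvmul d Q x) (mvmul d K z)) \<partial>\<mu>)))"

definition DxV :: "nat \<Rightarrow> (nat \<Rightarrow> real) \<Rightarrow> (nat \<Rightarrow> real) measure \<Rightarrow> params \<Rightarrow> (nat \<Rightarrow> nat \<Rightarrow> real)" where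
  "DxV d x \<mu> \<theta> = (\<lambda>i j. deriv (\<lambda>t. attn d (x(j := t)) \<mu> \<theta> i) (x j))"

end

theory Submission
  imports Defs "HOL-Probability.Probability"
begin

definition fro :: "nat \<Rightarrow> (nat \<Rightarrow> nat \<Rightarrow> real) \<Rightarrow> real" where
  "fro d A = sqrt (\<Sum>i<d. \<Sum>j<d. (A i j)\<^sup>2)"

lemma vnorm_L2: "vnorm d x = L2_set x {..<d}"
  by (simp add: vnorm_def L2_set_def)

lemma vdist_L2: "vdist d x y = L2_set (\<lambda>i. x i - y i) {..<d}"
  by (simp add: vdist_def L2_set_def)

lemma fro_nonneg[simp]: "0 \<le> fro d A"
  by (simp add: fro_def sum_nonneg)

lemma mvmul_sq_le: fixes A :: "nat \<Rightarrow> nat \<Rightarrow> real" shows "(\<Sum>j<d. A i j * v j)\<^sup>2 \<le> (\<Sum>j<d. (A i j)\<^sup>2) * (\<Sum>j<d. (v j)\<^sup>2)"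
  by (rule Cauchy_Schwarz_ineq_sum)

lemma mvmul_norm: "vnorm d (mvmul d A v) \<le> fro d A * vnorm d v"
proof -
  have "(\<Sum>i<d. (mvmul d A v i)\<^sup>2) \<le> (\<Sum>i<d. (\<Sum>j<d. (A i j)\<^sup>2) * (\<Sum>j<d. (v j)\<^sup>2))"
    by (intro sum_mono) (simp add: mvmul_def mvmul_sq_le)
  also have "\<dots> = (\<Sum>i<d. \<Sum>j<d. (A i j)\<^sup>2) * (\<Sum>j<d. (v j)\<^sup>2)"
    by (simp add: sum_distrib_right)
  finally have "sqrt (\<Sum>i<d. (mvmul d A v i)\<^sup>2) \<le> sqrt ((\<Sum>i<d. \<Sum>j<d. (A i j)\<^sup>2) * (\<Sum>j<d. (v j)\<^sup>2))"
    by (rule real_sqrt_le_mono)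
  then show ?thesis by (simp add: vnorm_def fro_def real_sqrt_mult)
qed

lemma vinner_bound: "\<bar>vinner d u v\<bar> \<le> vnorm d u * vnorm d v"
proof -
  have "(vinner d u v)\<^sup>2 \<le> (\<Sum>j<d. (u j)\<^sup>2) * (\<Sum>j<d. (v j)\<^sup>2)"
    unfolding vinner_def by (rule Cauchy_Schwarz_ineq_sum)
  then have "sqrt ((vinner d u v)\<^sup>2) \<le> sqrt ((\<Sum>j<d. (u j)\<^sup>2) * (\<Sum>j<d. (v j)\<^sup>2))"
    by (rule real_sqrt_le_mono)
  then show ?thesis by (simp add: vnorm_def real_sqrt_mult)
qed

lemma L2_abs_cong: "(\<And>k. k \<in> I \<Longrightarrow> \<bar>f k\<bar> = \<bar>g k\<bar>) \<Longrightarrow> L2_set f I = L2_set g I"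
proof -
  assume h: "\<And>k. k \<in> I \<Longrightarrow> \<bar>f k\<bar> = \<bar>g k\<bar>"
  have "\<And>k. k \<in> I \<Longrightarrow> (f k)\<^sup>2 = (g k)\<^sup>2" using h by (metis power2_abs)
  then show ?thesis unfolding L2_set_def by (metis (no_types, lifting) sum.cong)
qed

lemma L2_scal: "L2_set (\<lambda>k. c * u k) I = \<bar>c\<bar> * L2_set u I"
proof -
  have "L2_set (\<lambda>k. c * u k) I = L2_set (\<lambda>k. \<bar>c\<bar> * u k) I"
    by (rule L2_abs_cong) (simp add: abs_mult)
  also have "\<dots> = \<bar>c\<bar> * L2_set u I" by (simp add: L2_set_right_distrib)
  finally show ?thesis .
qed

lemma L2_neg: "L2_set (\<lambda>k. - f k) I = L2_set f I"
  by (rule L2_abs_cong) simp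

lemma L2_diff_tri: "L2_set (\<lambda>k. f k - g k) I \<le> L2_set f I + L2_set g I"
  using L2_set_triangle_ineq[of f "\<lambda>k. - g k" I] by (simp add: L2_neg)

lemma L2_diff_tri2: "L2_set (\<lambda>k. (f k - g k) - (f' k - g' k)) I
   \<le> L2_set (\<lambda>k. f k - f' k) I + L2_set (\<lambda>k. g k - g' k) I"
proof -
  have "L2_set (\<lambda>k. (f k - g k) - (f' k - g' k)) I = L2_set (\<lambda>k. (f k - f' k) - (g k - g' k)) I"
    by (rule L2_set_cong) auto
  also have "\<dots> \<le> L2_set (\<lambda>k. f k - f' k) I + L2_set (\<lambda>k. g k - g' k) I" by (rule L2_diff_tri)
  finally show ?thesis .
qed

lemma L2_scal_diff: "L2_set (\<lambda>k. a * u k - b * v k) I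
   \<le> \<bar>a - b\<bar> * L2_set u I + \<bar>b\<bar> * L2_set (\<lambda>k. u k - v k) I"
proof -
  have "L2_set (\<lambda>k. a * u k - b * v k) I = L2_set (\<lambda>k. (a - b) * u k + b * (u k - v k)) I"
    by (rule L2_set_cong) (auto simp: algebra_simps)
  also have "\<dots> \<le> L2_set (\<lambda>k. (a - b) * u k) I + L2_set (\<lambda>k. b * (u k - v k)) I"
    by (rule L2_set_triangle_ineq)
  finally show ?thesis by (simp add: L2_scal)
qed

lemma L2_outer: "L2_set (\<lambda>(i,j). u i * v j) (I \<times> J) = L2_set u I * L2_set v J"
proof -
  have "(\<Sum>p\<in>I \<times> J. ((case p of (i,j) \<Rightarrow> u i * v j))\<^sup>2) = (\<Sum>i\<in>I. \<Sum>j\<in>J. (u i)\<^sup>2 * (v j)\<^sup>2)"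
    by (simp add: sum.cartesian_product power_mult_distrib case_prod_beta')
  also have "\<dots> = (\<Sum>i\<in>I. (u i)\<^sup>2) * (\<Sum>j\<in>J. (v j)\<^sup>2)"
    by (simp add: sum_product)
  finally show ?thesis unfolding L2_set_def by (simp add: real_sqrt_mult)
qed

lemma L2_outer_diff: "L2_set (\<lambda>(i,j). u i * v j - u' i * v' j) (I \<times> J)
   \<le> L2_set (\<lambda>i. u i - u' i) I * L2_set v J + L2_set u' I * L2_set (\<lambda>j. v j - v' j) J"
proof -
  have "L2_set (\<lambda>(i,j). u i * v j - u' i * v' j) (I \<times> J)
     = L2_set (\<lambda>p. (case p of (i,j) \<Rightarrow> (u i - u' i) * v j) + (case p of (i,j) \<Rightarrow> u' i * (v j - v' j))) (I \<times> J)"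
    by (rule L2_set_cong) (auto simp: algebra_simps)
  also have "\<dots> \<le> L2_set (\<lambda>(i,j). (u i - u' i) * v j) (I \<times> J) + L2_set (\<lambda>(i,j). u' i * (v j - v' j)) (I \<times> J)"
    by (rule L2_set_triangle_ineq)
  also have "\<dots> = L2_set (\<lambda>i. u i - u' i) I * L2_set v J + L2_set u' I * L2_set (\<lambda>j. v j - v' j) J"
    by (simp add: L2_outer)
  finally show ?thesis .
qed

lemma bilin:
  fixes a b c e \<alpha> \<beta> \<gamma> \<epsilon> \<Delta> :: real
  assumes "0 \<le> a" "0 \<le> b" "0 \<le> c" "0 \<le> e" "0 \<le> \<Delta>" "0 \<le> \<beta>" "0 \<le> \<gamma>"
    "a \<le> \<alpha> * \<Delta>" "b \<le> \<beta>" "c \<le> \<gamma>" "e \<le> \<epsilon> * \<Delta>"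
  shows "a * b + c * e \<le> (\<alpha> * \<beta> + \<gamma> * \<epsilon>) * \<Delta>"
proof -
  have "a * b \<le> (\<alpha> * \<Delta>) * \<beta>" by (rule mult_mono) (use assms in auto)
  moreover have "c * e \<le> \<gamma> * (\<epsilon> * \<Delta>)" by (rule mult_mono) (use assms in auto)
  ultimately show ?thesis by (simp add: algebra_simps)
qed

lemma fro_L2: "fro d A = L2_set (\<lambda>(i,j). A i j) ({..<d} \<times> {..<d})"
  unfolding fro_def L2_set_def sum.cartesian_product by (auto intro!: arg_cong[where f=sqrt] sum.cong)

lemma vnorm_nonneg[simp]: "0 \<le> vnorm d x" by (simp add: vnorm_L2)
lemma vdist_nonneg[simp]: "0 \<le> vdist d x y" by (simp add: vdist_L2)

lemma vnorm_cong: "(\<And>i. i < d \<Longrightarrow> f i = g i) \<Longrightarrow> vnorm d f = vnorm d g"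
  unfolding vnorm_L2 by (rule L2_set_cong) auto

lemma mv_lip: "vnorm d (\<lambda>i. mvmul d A u i - mvmul d B v i)
   \<le> fro d (\<lambda>a b. A a b - B a b) * vnorm d u + fro d B * vdist d u v"
proof -
  have "vnorm d (\<lambda>i. mvmul d A u i - mvmul d B v i)
      = vnorm d (\<lambda>i. mvmul d (\<lambda>a b. A a b - B a b) u i + mvmul d B (\<lambda>k. u k - v k) i)"
    by (rule vnorm_cong) (simp add: mvmul_def algebra_simps sum_subtractf)
  also have "\<dots> \<le> vnorm d (mvmul d (\<lambda>a b. A a b - B a b) u) + vnorm d (mvmul d B (\<lambda>k. u k - v k))"
    unfolding vnorm_L2 by (rule L2_set_triangle_ineq)
  also have "\<dots> \<le> fro d (\<lambda>a b. A a b - B a b) * vnorm d u + fro d B * vdist d u v"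
    using mvmul_norm[of d "\<lambda>a b. A a b - B a b" u] mvmul_norm[of d B "\<lambda>k. u k - v k"]
    by (simp add: vdist_L2 vnorm_L2)
  finally show ?thesis .
qed

lemma vinner_lip: "\<bar>vinner d u v - vinner d u' v'\<bar>
   \<le> vdist d u u' * vnorm d v + vnorm d u' * vdist d v v'"
proof -
  have "vinner d u v - vinner d u' v' = vinner d (\<lambda>i. u i - u' i) v + vinner d u' (\<lambda>i. v i - v' i)"
    by (simp add: vinner_def algebra_simps sum_subtractf sum.distrib)
  then have "\<bar>vinner d u v - vinner d u' v'\<bar> \<le> \<bar>vinner d (\<lambda>i. u i - u' i) v\<bar> + \<bar>vinner d u' (\<lambda>i. v i - v' i)\<bar>"
    by simp
  also have "\<dots> \<le> vdist d u u' * vnorm d v + vnorm d u' * vdist d v v'"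
    using vinner_bound[of d "\<lambda>i. u i - u' i" v] vinner_bound[of d u' "\<lambda>i. v i - v' i"]
    by (simp add: vdist_L2 vnorm_L2)
  finally show ?thesis .
qed

definition qm :: "params \<Rightarrow> nat \<Rightarrow> nat \<Rightarrow> real" where "qm \<theta> = fst \<theta>"
definition km :: "params \<Rightarrow> nat \<Rightarrow> nat \<Rightarrow> real" where "km \<theta> = fst (snd \<theta>)"
definition vm :: "params \<Rightarrow> nat \<Rightarrow> nat \<Rightarrow> real" where "vm \<theta> = snd (snd \<theta>)"

lemma pdist_alt: "pdist d \<theta> \<theta>' = sqrt (\<Sum>i<d. \<Sum>j<d. (qm \<theta> i j - qm \<theta>' i j)\<^sup>2
   + (km \<theta> i j - km \<theta>' i j)\<^sup>2 + (vm \<theta> i j - vm \<theta>' i j)\<^sup>2)"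
  by (cases \<theta>; cases \<theta>') (simp add: pdist_def qm_def km_def vm_def)

lemma pnorm_alt: "pnorm d \<theta> = sqrt (\<Sum>i<d. \<Sum>j<d. (qm \<theta> i j)\<^sup>2 + (km \<theta> i j)\<^sup>2 + (vm \<theta> i j)\<^sup>2)"
  by (cases \<theta>) (simp add: pnorm_def pdist_def qm_def km_def vm_def)

lemma sqrt_sum_le3:
  fixes f g h :: "nat \<Rightarrow> nat \<Rightarrow> real"
  shows "sqrt (\<Sum>i<d. \<Sum>j<d. (f i j)\<^sup>2) \<le> sqrt (\<Sum>i<d. \<Sum>j<d. (f i j)\<^sup>2 + (g i j)\<^sup>2 + (h i j)\<^sup>2)"
   "sqrt (\<Sum>i<d. \<Sum>j<d. (g i j)\<^sup>2) \<le> sqrt (\<Sum>i<d. \<Sum>j<d. (f i j)\<^sup>2 + (g i j)\<^sup>2 + (h i j)\<^sup>2)"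
   "sqrt (\<Sum>i<d. \<Sum>j<d. (h i j)\<^sup>2) \<le> sqrt (\<Sum>i<d. \<Sum>j<d. (f i j)\<^sup>2 + (g i j)\<^sup>2 + (h i j)\<^sup>2)"
  by (intro real_sqrt_le_mono sum_mono; simp)+

lemma fro_le_pdist:
  "fro d (\<lambda>a b. qm \<theta> a b - qm \<theta>' a b) \<le> pdist d \<theta> \<theta>'"
  "fro d (\<lambda>a b. km \<theta> a b - km \<theta>' a b) \<le> pdist d \<theta> \<theta>'"
  "fro d (\<lambda>a b. vm \<theta> a b - vm \<theta>' a b) \<le> pdist d \<theta> \<theta>'"
  unfolding pdist_alt fro_def by (rule sqrt_sum_le3)+

lemma fro_le_pnorm:
  "fro d (qm \<theta>) \<le> pnorm d \<theta>" "fro d (km \<theta>) \<le> pnorm d \<theta>" "fro d (vm \<theta>) \<le> pnorm d \<theta>"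
  unfolding pnorm_alt fro_def by (rule sqrt_sum_le3)+

lemma fro_transp: "fro d (\<lambda>a b. A b a) = fro d A"
  unfolding fro_def using sum.swap[of "\<lambda>i j. (A j i)\<^sup>2" "{..<d}" "{..<d}"] by simp

lemma pdist_nonneg[simp]: "0 \<le> pdist d \<theta> \<theta>'"
  by (simp add: pdist_alt sum_nonneg)

lemma L2_outer': "L2_set (\<lambda>k. u (fst k) * v (snd k)) (I \<times> J) = L2_set u I * L2_set v J"
  using L2_outer[of u v I J] by (simp add: case_prod_unfold)

lemma L2_outer_diff': "L2_set (\<lambda>k. u (fst k) * v (snd k) - u' (fst k) * v' (snd k)) (I \<times> J)
   \<le> L2_set (\<lambda>i. u i - u' i) I * L2_set v J + L2_set u' I * L2_set (\<lambda>j. v j - v' j) J"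
  using L2_outer_diff[of u v u' v' I J] by (simp add: case_prod_unfold)

lemma exp_lip:
  fixes a b B :: real
  assumes "a \<le> B" "b \<le> B"
  shows "\<bar>exp a - exp b\<bar> \<le> exp B * \<bar>a - b\<bar>"
proof -
  have key: "exp q - exp p \<le> exp B * (q - p)" if "p \<le> q" "q \<le> B" for p q :: real
  proof -
    have "1 + (p - q) \<le> exp (p - q)" by (rule exp_ge_add_one_self)
    then have "exp q - exp p = exp q * (1 - exp (p - q))" by (simp add: algebra_simps exp_diff)
    also have "\<dots> \<le> exp q * (q - p)"
      using \<open>1 + (p - q) \<le> exp (p - q)\<close> by (intro mult_left_mono) (linarith, simp)
    also have "\<dots> \<le> exp B * (q - p)" using that by (intro mult_right_mono) auto
    finally show ?thesis .
  qed
  show ?thesis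
  proof (cases "a \<le> b")
    case True then show ?thesis using key[of a b] assms by (simp add: abs_if)
  next
    case False then show ?thesis using key[of b a] assms by (simp add: abs_if)
  qed
qed

lemma vdist_vnorm: "vdist d u v = vnorm d (\<lambda>i. u i - v i)"
  by (simp add: vdist_L2 vnorm_L2)

lemma mat_lip:
  assumes "fro d A \<le> M" "fro d B \<le> M" "fro d (\<lambda>a b. A a b - B a b) \<le> p"
    "vnorm d u \<le> r" "vnorm d v \<le> r"
  shows "vnorm d (mvmul d A u) \<le> M * r"
    "vdist d (mvmul d A u) (mvmul d B v) \<le> r * p + M * vdist d u v"
proof -
  have "0 \<le> M" using assms(1) fro_nonneg order_trans by blast
  have "0 \<le> p" using assms(3) fro_nonneg order_trans by blast
  show "vnorm d (mvmul d A u) \<le> M * r"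
    using mvmul_norm[of d A u] mult_mono[OF assms(1) assms(4)] \<open>0 \<le> M\<close> by simp
  have "vnorm d (\<lambda>i. mvmul d A u i - mvmul d B v i)
     \<le> fro d (\<lambda>a b. A a b - B a b) * vnorm d u + fro d B * vdist d u v" by (rule mv_lip)
  also have "\<dots> \<le> p * r + M * vdist d u v"
    using assms \<open>0 \<le> M\<close> \<open>0 \<le> p\<close> by (intro add_mono mult_mono) auto
  finally show "vdist d (mvmul d A u) (mvmul d B v) \<le> r * p + M * vdist d u v"
    by (simp add: mult.commute vdist_vnorm)
qed

definition sc :: "nat \<Rightarrow> params \<Rightarrow> (nat \<Rightarrow> real) \<Rightarrow> (nat \<Rightarrow> real) \<Rightarrow> real" where
  "sc d \<theta> x y = vinner d (mvmul d (qm \<theta>) x) (mvmul d (km \<theta>) y)"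
definition wts :: "nat \<Rightarrow> params \<Rightarrow> (nat \<Rightarrow> real) \<Rightarrow> (nat \<Rightarrow> real) \<Rightarrow> real" where
  "wts d \<theta> x y = exp (sc d \<theta> x y)"
definition vv :: "nat \<Rightarrow> params \<Rightarrow> (nat \<Rightarrow> real) \<Rightarrow> (nat \<Rightarrow> real)" where
  "vv d \<theta> y = mvmul d (vm \<theta>) y"
definition cc :: "nat \<Rightarrow> params \<Rightarrow> (nat \<Rightarrow> real) \<Rightarrow> (nat \<Rightarrow> real)" where
  "cc d \<theta> y = mvmul d (\<lambda>a b. qm \<theta> b a) (mvmul d (km \<theta>) y)"

definition adm :: "nat \<Rightarrow> real \<Rightarrow> real \<Rightarrow> params \<Rightarrow> (nat \<Rightarrow> real) \<Rightarrow> (nat \<Rightarrow> real) \<Rightarrow> bool" where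
  "adm d M R \<theta> x y \<longleftrightarrow> pnorm d \<theta> \<le> M \<and> vnorm d x \<le> R \<and> vnorm d y \<le> R"

definition Dl where "Dl d \<theta> \<theta>' x x' y y' = vdist d x x' + pdist d \<theta> \<theta>' + vdist d y y'"

lemma lin2:
  fixes a b p q D :: real
  assumes "0 \<le> a" "0 \<le> b" "p \<le> D" "q \<le> D"
  shows "a * p + b * q \<le> (a + b) * D"
proof -
  have "a * p \<le> a * D" "b * q \<le> b * D" using assms by (auto intro: mult_left_mono)
  then show ?thesis by (simp add: distrib_right)
qed

lemma Dl_nonneg: "0 \<le> Dl d \<theta> \<theta>' x x' y y'" by (simp add: Dl_def)


context
  fixes M R :: real and d :: nat and \<theta> \<theta>' :: params and x x' y y' :: "nat \<Rightarrow> real"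
  assumes A: "adm d M R \<theta> x y" and A': "adm d M R \<theta>' x' y'"
begin

lemma MR_nonneg: "0 \<le> M" "0 \<le> R"
proof -
  have "0 \<le> pnorm d \<theta>" by (simp add: pnorm_alt sum_nonneg)
  then show "0 \<le> M" using A unfolding adm_def by linarith
  show "0 \<le> R" using A vnorm_nonneg[of d x] unfolding adm_def by linarith
qed

abbreviation "\<Delta> \<equiv> Dl d \<theta> \<theta>' x x' y y'"

lemma Qx: "vnorm d (mvmul d (qm \<theta>) x) \<le> M * R"
  "vdist d (mvmul d (qm \<theta>) x) (mvmul d (qm \<theta>') x') \<le> (R + M) * \<Delta>"
proof -
  have f: "fro d (qm \<theta>) \<le> M" "fro d (qm \<theta>') \<le> M"
    using fro_le_pnorm A A' unfolding adm_def by (meson order_trans)+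
  show "vnorm d (mvmul d (qm \<theta>) x) \<le> M * R"
    using mat_lip(1)[OF f fro_le_pdist(1)] A A' unfolding adm_def by blast
  have "vdist d (mvmul d (qm \<theta>) x) (mvmul d (qm \<theta>') x') \<le> R * pdist d \<theta> \<theta>' + M * vdist d x x'"
    by (rule mat_lip(2)[OF f fro_le_pdist(1)]) (use A A' in \<open>auto simp: adm_def\<close>)
  also have "\<dots> \<le> (R + M) * \<Delta>" using MR_nonneg
    by (intro lin2) (auto simp: Dl_def)
  finally show "vdist d (mvmul d (qm \<theta>) x) (mvmul d (qm \<theta>') x') \<le> (R + M) * \<Delta>" .
qed

lemma Ky: "vnorm d (mvmul d (km \<theta>) y) \<le> M * R" "vnorm d (mvmul d (km \<theta>') y') \<le> M * R"
  "vdist d (mvmul d (km \<theta>) y) (mvmul d (km \<theta>') y') \<le> (R + M) * \<Delta>"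
proof -
  have f: "fro d (km \<theta>) \<le> M" "fro d (km \<theta>') \<le> M"
    using fro_le_pnorm A A' unfolding adm_def by (meson order_trans)+
  show "vnorm d (mvmul d (km \<theta>) y) \<le> M * R"
    using mat_lip(1)[OF f fro_le_pdist(2)] A A' unfolding adm_def by blast
  show "vnorm d (mvmul d (km \<theta>') y') \<le> M * R"
    using mat_lip(1)[OF f(2) f(1) fro_le_pdist(2)] A A' unfolding adm_def by blast
  have "vdist d (mvmul d (km \<theta>) y) (mvmul d (km \<theta>') y') \<le> R * pdist d \<theta> \<theta>' + M * vdist d y y'"
    by (rule mat_lip(2)[OF f fro_le_pdist(2)]) (use A A' in \<open>auto simp: adm_def\<close>)
  also have "\<dots> \<le> (R + M) * \<Delta>" using MR_nonneg
    by (intro lin2) (auto simp: Dl_def)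
  finally show "vdist d (mvmul d (km \<theta>) y) (mvmul d (km \<theta>') y') \<le> (R + M) * \<Delta>" .
qed

lemma Vy: "vnorm d (vv d \<theta> y) \<le> M * R" "vnorm d (vv d \<theta>' y') \<le> M * R"
  "vdist d (vv d \<theta> y) (vv d \<theta>' y') \<le> (R + M) * \<Delta>"
proof -
  have f: "fro d (vm \<theta>) \<le> M" "fro d (vm \<theta>') \<le> M"
    using fro_le_pnorm A A' unfolding adm_def by (meson order_trans)+
  show "vnorm d (vv d \<theta> y) \<le> M * R"
    using mat_lip(1)[OF f fro_le_pdist(3)] A A' unfolding adm_def vv_def by blast
  show "vnorm d (vv d \<theta>' y') \<le> M * R"
    using mat_lip(1)[OF f(2) f(1) fro_le_pdist(3)] A A' unfolding adm_def vv_def by blast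
  have "vdist d (vv d \<theta> y) (vv d \<theta>' y') \<le> R * pdist d \<theta> \<theta>' + M * vdist d y y'"
    unfolding vv_def by (rule mat_lip(2)[OF f fro_le_pdist(3)]) (use A A' in \<open>auto simp: adm_def\<close>)
  also have "\<dots> \<le> (R + M) * \<Delta>" using MR_nonneg
    by (intro lin2) (auto simp: Dl_def)
  finally show "vdist d (vv d \<theta> y) (vv d \<theta>' y') \<le> (R + M) * \<Delta>" .
qed

lemma Cy: "vnorm d (cc d \<theta> y) \<le> M * (M * R)" "vnorm d (cc d \<theta>' y') \<le> M * (M * R)"
  "vdist d (cc d \<theta> y) (cc d \<theta>' y') \<le> (M * R + M * (R + M)) * \<Delta>"
proof -
  have f: "fro d (\<lambda>a b. qm \<theta> b a) \<le> M" "fro d (\<lambda>a b. qm \<theta>' b a) \<le> M"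
    using fro_transp[of d "qm \<theta>"] fro_le_pnorm(1)[of d \<theta>] fro_transp[of d "qm \<theta>'"]
      fro_le_pnorm(1)[of d \<theta>'] A A' unfolding adm_def by linarith+
  have fd: "fro d (\<lambda>a b. qm \<theta> b a - qm \<theta>' b a) \<le> pdist d \<theta> \<theta>'"
    using fro_le_pdist(1)[of d \<theta> \<theta>'] fro_transp[of d "\<lambda>a b. qm \<theta> a b - qm \<theta>' a b"] by linarith
  show "vnorm d (cc d \<theta> y) \<le> M * (M * R)"
    unfolding cc_def by (rule mat_lip(1)[OF f fd Ky(1) Ky(2)])
  show "vnorm d (cc d \<theta>' y') \<le> M * (M * R)"
    unfolding cc_def by (rule mat_lip(1)[OF f(2) f(1) order_refl Ky(2) Ky(1)])
  have "vdist d (cc d \<theta> y) (cc d \<theta>' y') \<le> (M * R) * pdist d \<theta> \<theta>' + M * ((R + M) * \<Delta>)"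
  proof -
    have "vdist d (cc d \<theta> y) (cc d \<theta>' y') \<le> (M * R) * pdist d \<theta> \<theta>' + M * vdist d (mvmul d (km \<theta>) y) (mvmul d (km \<theta>') y')"
      unfolding cc_def by (rule mat_lip(2)[OF f fd Ky(1) Ky(2)])
    also have "\<dots> \<le> (M * R) * pdist d \<theta> \<theta>' + M * ((R + M) * \<Delta>)"
      using Ky(3) MR_nonneg by (intro add_mono mult_left_mono) auto
    finally show ?thesis .
  qed
  also have "\<dots> = (M * R) * pdist d \<theta> \<theta>' + (M * (R + M)) * \<Delta>" by simp
  also have "\<dots> \<le> (M * R + M * (R + M)) * \<Delta>" using MR_nonneg
    by (intro lin2) (auto simp: Dl_def)
  finally show "vdist d (cc d \<theta> y) (cc d \<theta>' y') \<le> (M * R + M * (R + M)) * \<Delta>" .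
qed

end

definition hZ :: "nat \<Rightarrow> params \<Rightarrow> (nat \<Rightarrow> real) \<Rightarrow> (nat \<Rightarrow> real) \<Rightarrow> unit \<Rightarrow> real" where
  "hZ d \<theta> x y = (\<lambda>_. wts d \<theta> x y)"
definition hA :: "nat \<Rightarrow> params \<Rightarrow> (nat \<Rightarrow> real) \<Rightarrow> (nat \<Rightarrow> real) \<Rightarrow> nat \<Rightarrow> real" where
  "hA d \<theta> x y = (\<lambda>i. wts d \<theta> x y * vv d \<theta> y i)"
definition hB :: "nat \<Rightarrow> params \<Rightarrow> (nat \<Rightarrow> real) \<Rightarrow> (nat \<Rightarrow> real) \<Rightarrow> nat \<Rightarrow> real" where
  "hB d \<theta> x y = (\<lambda>j. wts d \<theta> x y * cc d \<theta> y j)"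
definition hC :: "nat \<Rightarrow> params \<Rightarrow> (nat \<Rightarrow> real) \<Rightarrow> (nat \<Rightarrow> real) \<Rightarrow> nat \<times> nat \<Rightarrow> real" where
  "hC d \<theta> x y = (\<lambda>k. wts d \<theta> x y * (vv d \<theta> y (fst k) * cc d \<theta> y (snd k)))"

lemma L2_unit: "L2_set f {()} = \<bar>f ()\<bar>"
  by (simp add: L2_set_def)

definition "EE M R = exp ((M * R) * (M * R))"
definition "LS M R = (R + M) * (M * R) + (M * R) * (R + M)"
definition "KO M R = (R + M) * (M * (M * R)) + (M * R) * (M * R + M * (R + M))"

context
  fixes M R :: real and d :: nat and \<theta> \<theta>' :: params and x x' y y' :: "nat \<Rightarrow> real"
  assumes A: "adm d M R \<theta> x y" and A': "adm d M R \<theta>' x' y'"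
begin

abbreviation "\<Delta>' \<equiv> Dl d \<theta> \<theta>' x x' y y'"

lemma MR0: "0 \<le> M" "0 \<le> R" using MR_nonneg[OF A A'] by auto

lemma sc_bd: "\<bar>sc d \<theta> x y\<bar> \<le> (M * R) * (M * R)" "\<bar>sc d \<theta>' x' y'\<bar> \<le> (M * R) * (M * R)"
proof -
  show "\<bar>sc d \<theta> x y\<bar> \<le> (M * R) * (M * R)"
    unfolding sc_def using vinner_bound Qx(1)[OF A A'] Ky(1)[OF A A']
    by (meson mult_mono order_trans vnorm_nonneg)
  show "\<bar>sc d \<theta>' x' y'\<bar> \<le> (M * R) * (M * R)"
    unfolding sc_def using vinner_bound Qx(1)[OF A' A] Ky(1)[OF A' A]
    by (meson mult_mono order_trans vnorm_nonneg)
qed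

lemma sc_lip: "\<bar>sc d \<theta> x y - sc d \<theta>' x' y'\<bar> \<le> LS M R * \<Delta>'"
proof -
  have "\<bar>sc d \<theta> x y - sc d \<theta>' x' y'\<bar>
     \<le> vdist d (mvmul d (qm \<theta>) x) (mvmul d (qm \<theta>') x') * vnorm d (mvmul d (km \<theta>) y)
       + vnorm d (mvmul d (qm \<theta>') x') * vdist d (mvmul d (km \<theta>) y) (mvmul d (km \<theta>') y')"
    unfolding sc_def by (rule vinner_lip)
  also have "\<dots> \<le> ((R + M) * (M * R) + (M * R) * (R + M)) * \<Delta>'"
    by (rule bilin) (use Qx[OF A A'] Qx(1)[OF A' A] Ky[OF A A'] MR0 Dl_nonneg in auto)
  finally show ?thesis by (simp add: LS_def)
qed

lemma wf_bd: "0 < wts d \<theta> x y" "wts d \<theta> x y \<le> EE M R" "0 < wts d \<theta>' x' y'" "wts d \<theta>' x' y' \<le> EE M R"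
  using sc_bd by (auto simp: wts_def EE_def)

lemma wf_lip: "\<bar>wts d \<theta> x y - wts d \<theta>' x' y'\<bar> \<le> (EE M R * LS M R) * \<Delta>'"
proof -
  have "\<bar>wts d \<theta> x y - wts d \<theta>' x' y'\<bar> \<le> EE M R * \<bar>sc d \<theta> x y - sc d \<theta>' x' y'\<bar>"
    unfolding wts_def EE_def by (rule exp_lip) (use sc_bd in auto)
  also have "\<dots> \<le> EE M R * (LS M R * \<Delta>')"
    by (rule mult_left_mono[OF sc_lip]) (simp add: EE_def)
  finally show ?thesis by simp
qed

lemma hZ_bd: "L2_set (hZ d \<theta> x y) {()} \<le> EE M R"
  using wf_bd by (simp add: L2_unit hZ_def)

lemma hZ_lip: "L2_set (\<lambda>k. hZ d \<theta> x y k - hZ d \<theta>' x' y' k) {()} \<le> (EE M R * LS M R) * \<Delta>'"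
  using wf_lip by (simp add: L2_unit hZ_def)

lemma hA_bd: "L2_set (hA d \<theta> x y) {..<d} \<le> EE M R * (M * R)"
proof -
  have "L2_set (hA d \<theta> x y) {..<d} = \<bar>wts d \<theta> x y\<bar> * vnorm d (vv d \<theta> y)"
    by (simp add: hA_def L2_scal vnorm_L2)
  also have "\<dots> \<le> EE M R * (M * R)"
    using wf_bd Vy(1)[OF A A'] by (intro mult_mono) auto
  finally show ?thesis .
qed

lemma hA_lip: "L2_set (\<lambda>k. hA d \<theta> x y k - hA d \<theta>' x' y' k) {..<d}
   \<le> ((EE M R * LS M R) * (M * R) + EE M R * (R + M)) * \<Delta>'"
proof -
  have "L2_set (\<lambda>k. hA d \<theta> x y k - hA d \<theta>' x' y' k) {..<d}
     \<le> \<bar>wts d \<theta> x y - wts d \<theta>' x' y'\<bar> * vnorm d (vv d \<theta> y) + \<bar>wts d \<theta>' x' y'\<bar> * vdist d (vv d \<theta> y) (vv d \<theta>' y')"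
    unfolding hA_def vnorm_L2 vdist_L2 by (rule L2_scal_diff)
  also have "\<dots> \<le> ((EE M R * LS M R) * (M * R) + EE M R * (R + M)) * \<Delta>'"
    by (rule bilin) (use wf_lip wf_bd Vy[OF A A'] MR0 Dl_nonneg in \<open>auto simp: EE_def\<close>)
  finally show ?thesis .
qed

lemma hB_bd: "L2_set (hB d \<theta> x y) {..<d} \<le> EE M R * (M * (M * R))"
proof -
  have "L2_set (hB d \<theta> x y) {..<d} = \<bar>wts d \<theta> x y\<bar> * vnorm d (cc d \<theta> y)"
    by (simp add: hB_def L2_scal vnorm_L2)
  also have "\<dots> \<le> EE M R * (M * (M * R))"
    using wf_bd Cy(1)[OF A A'] by (intro mult_mono) auto
  finally show ?thesis .
qed

lemma hB_lip: "L2_set (\<lambda>k. hB d \<theta> x y k - hB d \<theta>' x' y' k) {..<d}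
   \<le> ((EE M R * LS M R) * (M * (M * R)) + EE M R * (M * R + M * (R + M))) * \<Delta>'"
proof -
  have "L2_set (\<lambda>k. hB d \<theta> x y k - hB d \<theta>' x' y' k) {..<d}
     \<le> \<bar>wts d \<theta> x y - wts d \<theta>' x' y'\<bar> * vnorm d (cc d \<theta> y) + \<bar>wts d \<theta>' x' y'\<bar> * vdist d (cc d \<theta> y) (cc d \<theta>' y')"
    unfolding hB_def vnorm_L2 vdist_L2 by (rule L2_scal_diff)
  also have "\<dots> \<le> ((EE M R * LS M R) * (M * (M * R)) + EE M R * (M * R + M * (R + M))) * \<Delta>'"
    by (rule bilin) (use wf_lip wf_bd Cy[OF A A'] MR0 Dl_nonneg in \<open>auto simp: EE_def\<close>)
  finally show ?thesis .
qed

lemma O_bd: "L2_set (\<lambda>k. vv d \<theta> y (fst k) * cc d \<theta> y (snd k)) ({..<d} \<times> {..<d}) \<le> (M * R) * (M * (M * R))"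
  using Vy(1)[OF A A'] Cy(1)[OF A A'] MR0 by (simp add: L2_outer' flip: vnorm_L2) (intro mult_mono, auto)

lemma O_lip: "L2_set (\<lambda>k. vv d \<theta> y (fst k) * cc d \<theta> y (snd k) - vv d \<theta>' y' (fst k) * cc d \<theta>' y' (snd k)) ({..<d} \<times> {..<d})
   \<le> KO M R * \<Delta>'"
proof -
  have "L2_set (\<lambda>k. vv d \<theta> y (fst k) * cc d \<theta> y (snd k) - vv d \<theta>' y' (fst k) * cc d \<theta>' y' (snd k)) ({..<d} \<times> {..<d})
    \<le> vdist d (vv d \<theta> y) (vv d \<theta>' y') * vnorm d (cc d \<theta> y) + vnorm d (vv d \<theta>' y') * vdist d (cc d \<theta> y) (cc d \<theta>' y')"
    unfolding vnorm_L2 vdist_L2 by (rule L2_outer_diff')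
  also have "\<dots> \<le> KO M R * \<Delta>'"
    unfolding KO_def by (rule bilin) (use Vy[OF A A'] Cy[OF A A'] MR0 Dl_nonneg in auto)
  finally show ?thesis .
qed

lemma hC_bd: "L2_set (hC d \<theta> x y) ({..<d} \<times> {..<d}) \<le> EE M R * ((M * R) * (M * (M * R)))"
proof -
  have "L2_set (hC d \<theta> x y) ({..<d} \<times> {..<d}) = \<bar>wts d \<theta> x y\<bar> * L2_set (\<lambda>k. vv d \<theta> y (fst k) * cc d \<theta> y (snd k)) ({..<d} \<times> {..<d})"
    unfolding hC_def by (rule L2_scal)
  also have "\<dots> \<le> EE M R * ((M * R) * (M * (M * R)))"
    using wf_bd O_bd by (intro mult_mono) auto
  finally show ?thesis .
qed

lemma hC_lip: "L2_set (\<lambda>k. hC d \<theta> x y k - hC d \<theta>' x' y' k) ({..<d} \<times> {..<d})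
   \<le> ((EE M R * LS M R) * ((M * R) * (M * (M * R))) + EE M R * KO M R) * \<Delta>'"
proof -
  have "L2_set (\<lambda>k. hC d \<theta> x y k - hC d \<theta>' x' y' k) ({..<d} \<times> {..<d})
     \<le> \<bar>wts d \<theta> x y - wts d \<theta>' x' y'\<bar> * L2_set (\<lambda>k. vv d \<theta> y (fst k) * cc d \<theta> y (snd k)) ({..<d} \<times> {..<d})
       + \<bar>wts d \<theta>' x' y'\<bar> * L2_set (\<lambda>k. vv d \<theta> y (fst k) * cc d \<theta> y (snd k) - vv d \<theta>' y' (fst k) * cc d \<theta>' y' (snd k)) ({..<d} \<times> {..<d})"
    unfolding hC_def by (rule L2_scal_diff)
  also have "\<dots> \<le> ((EE M R * LS M R) * ((M * R) * (M * (M * R))) + EE M R * KO M R) * \<Delta>'"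
    by (rule bilin) (use wf_lip wf_bd O_bd O_lip MR0 Dl_nonneg in \<open>auto simp: EE_def\<close>)
  finally show ?thesis .
qed

end

lemma Rd_comp: "j < d \<Longrightarrow> (\<lambda>y. y j) \<in> borel_measurable (Rd d)"
  unfolding Rd_def by (rule measurable_component_singleton) simp

lemma mv_meas:
  assumes "\<And>j. j < d \<Longrightarrow> (\<lambda>y. f y j) \<in> borel_measurable N"
  shows "(\<lambda>y. mvmul d A (f y) i) \<in> borel_measurable N"
proof (cases "i < d")
  case True
  then show ?thesis unfolding mvmul_def
    by (simp, intro borel_measurable_sum borel_measurable_times measurable_const assms) auto
next
  case False
  then show ?thesis unfolding mvmul_def by simp
qed

lemma vinner_meas:
  assumes "\<And>j. j < d \<Longrightarrow> (\<lambda>y. u y j) \<in> borel_measurable N"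
    "\<And>j. j < d \<Longrightarrow> (\<lambda>y. v y j) \<in> borel_measurable N"
  shows "(\<lambda>y. vinner d (u y) (v y)) \<in> borel_measurable N"
  unfolding vinner_def
  by (intro borel_measurable_sum borel_measurable_times assms) auto

lemma vnorm_meas[measurable]: "vnorm d \<in> borel_measurable (Rd d)"
proof -
  have "(\<lambda>y. (\<Sum>i<d. (y i)\<^sup>2)) \<in> borel_measurable (Rd d)"
    by (rule borel_measurable_sum, rule borel_measurable_power, rule Rd_comp) auto
  then have "(\<lambda>y. sqrt (\<Sum>i<d. (y i)\<^sup>2)) \<in> borel_measurable (Rd d)"
    by (rule measurable_compose[OF _ borel_measurable_sqrt])
  then show ?thesis unfolding vnorm_def[abs_def] .
qed

lemma wts_meas: "(\<lambda>y. wts d \<theta> x y) \<in> borel_measurable (Rd d)"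
proof -
  have 1: "(\<lambda>y. mvmul d (km \<theta>) y j) \<in> borel_measurable (Rd d)" for j
    by (rule mv_meas) (rule Rd_comp)
  have 2: "(\<lambda>y. vinner d (mvmul d (qm \<theta>) x) (mvmul d (km \<theta>) y)) \<in> borel_measurable (Rd d)"
    by (rule vinner_meas) (auto intro: 1)
  show ?thesis unfolding wts_def sc_def by (rule measurable_compose[OF 2 borel_measurable_exp])
qed

lemma vv_meas: "(\<lambda>y. vv d \<theta> y i) \<in> borel_measurable (Rd d)"
  unfolding vv_def by (intro mv_meas Rd_comp)

lemma cc_meas: "(\<lambda>y. cc d \<theta> y i) \<in> borel_measurable (Rd d)"
  unfolding cc_def by (intro mv_meas Rd_comp)

lemma hZ_meas: "(\<lambda>y. hZ d \<theta> x y k) \<in> borel_measurable (Rd d)"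
  unfolding hZ_def by (rule wts_meas)
lemma hA_meas: "(\<lambda>y. hA d \<theta> x y k) \<in> borel_measurable (Rd d)"
  unfolding hA_def by (intro borel_measurable_times wts_meas vv_meas)
lemma hB_meas: "(\<lambda>y. hB d \<theta> x y k) \<in> borel_measurable (Rd d)"
  unfolding hB_def by (intro borel_measurable_times wts_meas cc_meas)
lemma hC_meas: "(\<lambda>y. hC d \<theta> x y k) \<in> borel_measurable (Rd d)"
  unfolding hC_def by (intro borel_measurable_times wts_meas cc_meas vv_meas)

lemma supp_facts:
  assumes "prob_supp d R \<mu>"
  shows "prob_space \<mu>" "sets \<mu> = sets (Rd d)" "space \<mu> = space (Rd d)"
    "AE y in \<mu>. vnorm d y \<le> R"
proof -
  show P: "prob_space \<mu>" and S: "sets \<mu> = sets (Rd d)" using assms by (auto simp: prob_supp_def)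
  show Sp: "space \<mu> = space (Rd d)" using S by (rule sets_eq_imp_space_eq)
  have "vnorm d -` {R<..} \<inter> space (Rd d) \<in> sets (Rd d)"
    by (rule measurable_sets[OF vnorm_meas]) simp
  moreover have "vnorm d -` {R<..} \<inter> space (Rd d) = {y \<in> space (Rd d). R < vnorm d y}" by auto
  ultimately have m: "{y \<in> space (Rd d). R < vnorm d y} \<in> sets \<mu>" unfolding S by simp
  show "AE y in \<mu>. vnorm d y \<le> R"
    by (subst AE_iff_measurable[OF m]) (use assms Sp in \<open>auto simp: prob_supp_def not_le\<close>)
qed

lemma meas_supp:
  fixes f :: "(nat \<Rightarrow> real) \<Rightarrow> real"
  assumes "prob_supp d R \<mu>" "f \<in> borel_measurable (Rd d)" shows "f \<in> borel_measurable \<mu>"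
proof -
  have "sets \<mu> = sets (Rd d)" by (rule supp_facts(2)[OF assms(1)])
  then have "measurable \<mu> (borel :: real measure) = measurable (Rd d) borel"
    by (rule measurable_cong_sets) simp
  then show ?thesis using assms(2) by simp
qed

lemma intg_supp:
  fixes f :: "(nat \<Rightarrow> real) \<Rightarrow> real" and B :: real
  assumes "prob_supp d R \<mu>" "f \<in> borel_measurable (Rd d)" "\<And>y. vnorm d y \<le> R \<Longrightarrow> \<bar>f y\<bar> \<le> B"
  shows "integrable \<mu> f"
proof -
  interpret prob_space \<mu> using supp_facts(1)[OF assms(1)] .
  show ?thesis
  proof (rule integrable_const_bound[where B=B])
    show "AE x in \<mu>. norm (f x) \<le> B" using supp_facts(4)[OF assms(1)] assms(3) by auto
    show "f \<in> borel_measurable \<mu>" by (rule meas_supp[OF assms(1,2)])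
  qed
qed

lemma mink:
  fixes h :: "'a \<Rightarrow> 'i \<Rightarrow> real"
  assumes P: "prob_space N" and fin: "finite I"
    and ih: "\<And>k. k \<in> I \<Longrightarrow> integrable N (\<lambda>y. h y k)"
    and iphi: "integrable N phi"
    and ae: "AE y in N. L2_set (h y) I \<le> phi y"
  shows "L2_set (\<lambda>k. \<integral>y. h y k \<partial>N) I \<le> (\<integral>y. phi y \<partial>N)"
proof -
  interpret prob_space N by (rule P)
  define u where "u k = (\<integral>y. h y k \<partial>N)" for k
  define S where "S = L2_set u I"
  have S0: "0 \<le> S" by (simp add: S_def)
  have "AE y in N. 0 \<le> phi y" using ae
    by (rule eventually_mono) (rule order_trans[OF L2_set_nonneg])
  then have phi0: "0 \<le> (\<integral>y. phi y \<partial>N)" by (rule integral_nonneg_AE)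
  have "S * S = (\<Sum>k\<in>I. (u k)\<^sup>2)"
    unfolding S_def L2_set_def by (simp add: sum_nonneg)
  also have "\<dots> = (\<Sum>k\<in>I. u k * u k)" by (simp add: power2_eq_square)
  also have "\<dots> = (\<Sum>k\<in>I. \<integral>y. u k * h y k \<partial>N)"
    by (intro sum.cong refl) (simp add: u_def)
  also have "\<dots> = (\<integral>y. (\<Sum>k\<in>I. u k * h y k) \<partial>N)"
  proof -
    have "(\<integral>y. (\<Sum>k\<in>I. u k * h y k) \<partial>N) = (\<Sum>k\<in>I. \<integral>y. u k * h y k \<partial>N)"
      by (rule Bochner_Integration.integral_sum, intro integrable_mult_right) (simp add: ih)
    then show ?thesis by simp
  qed
  also have "\<dots> \<le> (\<integral>y. S * phi y \<partial>N)"
  proof (rule integral_mono_AE)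
    show "integrable N (\<lambda>y. \<Sum>k\<in>I. u k * h y k)"
      by (intro Bochner_Integration.integrable_sum integrable_mult_right) (simp add: ih)
    show "integrable N (\<lambda>y. S * phi y)" by (intro integrable_mult_right iphi)
    show "AE y in N. (\<Sum>k\<in>I. u k * h y k) \<le> S * phi y"
      using ae
    proof (rule eventually_mono)
      fix y assume a: "L2_set (h y) I \<le> phi y"
      have "(\<Sum>k\<in>I. u k * h y k) \<le> (\<Sum>k\<in>I. \<bar>u k\<bar> * \<bar>h y k\<bar>)"
        by (intro sum_mono) (metis abs_ge_self abs_mult)
      also have "\<dots> \<le> S * L2_set (h y) I" unfolding S_def by (rule L2_set_mult_ineq)
      also have "\<dots> \<le> S * phi y" using a S0 by (intro mult_left_mono)
      finally show "(\<Sum>k\<in>I. u k * h y k) \<le> S * phi y" .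
    qed
  qed
  also have "\<dots> = S * (\<integral>y. phi y \<partial>N)" by simp
  finally have "S * S \<le> S * (\<integral>y. phi y \<partial>N)" .
  note SS = this
  have Leq: "L2_set (\<lambda>k. \<integral>y. h y k \<partial>N) I = S" unfolding S_def by (rule L2_set_cong) (auto simp: u_def)
  show ?thesis
  proof (cases "S = 0")
    case True then show ?thesis using phi0 Leq by linarith
  next
    case False then have "0 < S" using S0 by simp
    have "S \<le> (\<integral>y. phi y \<partial>N)"
      by (rule mult_left_le_imp_le[OF SS \<open>0 < S\<close>])
    then show ?thesis using Leq by linarith
  qed
qed

lemma abs_le_L2: "finite I \<Longrightarrow> k \<in> I \<Longrightarrow> \<bar>f k\<bar> \<le> L2_set f I"
  using member_le_L2_set[of I k "\<lambda>k. \<bar>f k\<bar>"] L2_abs_cong[of I "\<lambda>k. \<bar>f k\<bar>" f] by simp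

lemma vdist_le: "vdist d y y' \<le> vnorm d y + vnorm d y'"
  unfolding vdist_L2 vnorm_L2 by (rule L2_diff_tri)

lemma vdist_meas: "(\<lambda>p. vdist d (fst p) (snd p)) \<in> borel_measurable (Rd d \<Otimes>\<^sub>M Rd d)"
proof -
  have c: "(\<lambda>p. fst p j - snd p j) \<in> borel_measurable (Rd d \<Otimes>\<^sub>M Rd d)" if "j < d" for j
    by (rule borel_measurable_diff; rule measurable_compose[OF _ Rd_comp[OF that]])
       (rule measurable_fst, rule measurable_snd)
  have "(\<lambda>p. (\<Sum>i<d. (fst p i - snd p i)\<^sup>2)) \<in> borel_measurable (Rd d \<Otimes>\<^sub>M Rd d)"
    by (rule borel_measurable_sum, rule borel_measurable_power, rule c) auto
  then have "(\<lambda>p. sqrt (\<Sum>i<d. (fst p i - snd p i)\<^sup>2)) \<in> borel_measurable (Rd d \<Otimes>\<^sub>M Rd d)"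
    by (rule measurable_compose[OF _ borel_measurable_sqrt])
  then show ?thesis unfolding vdist_def .
qed

lemma ball_sets: "{y \<in> space (Rd d). vnorm d y \<le> R} \<in> sets (Rd d)"
proof -
  have "vnorm d -` {..R} \<inter> space (Rd d) \<in> sets (Rd d)"
    by (rule measurable_sets[OF vnorm_meas]) simp
  moreover have "vnorm d -` {..R} \<inter> space (Rd d) = {y \<in> space (Rd d). vnorm d y \<le> R}" by auto
  ultimately show ?thesis by simp
qed

lemma cpl_facts:
  assumes pi: "\<pi> \<in> couplings d \<mu> \<mu>'" and m: "prob_supp d R \<mu>" and m': "prob_supp d R \<mu>'"
  shows "prob_space \<pi>" "fst \<in> measurable \<pi> (Rd d)" "snd \<in> measurable \<pi> (Rd d)"
    "(\<lambda>p. vdist d (fst p) (snd p)) \<in> borel_measurable \<pi>"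
    "AE p in \<pi>. vnorm d (fst p) \<le> R \<and> vnorm d (snd p) \<le> R"
    "\<And>f::(nat\<Rightarrow>real)\<Rightarrow>real. f \<in> borel_measurable (Rd d) \<Longrightarrow> integral\<^sup>L \<mu> f = (\<integral>p. f (fst p) \<partial>\<pi>)"
    "\<And>f::(nat\<Rightarrow>real)\<Rightarrow>real. f \<in> borel_measurable (Rd d) \<Longrightarrow> integral\<^sup>L \<mu>' f = (\<integral>p. f (snd p) \<partial>\<pi>)"
proof -
  show P: "prob_space \<pi>" using pi by (simp add: couplings_def)
  have S: "sets \<pi> = sets (Rd d \<Otimes>\<^sub>M Rd d)" using pi by (simp add: couplings_def)
  have D1: "distr \<pi> (Rd d) fst = \<mu>" and D2: "distr \<pi> (Rd d) snd = \<mu>'" using pi by (auto simp: couplings_def)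
  have MC: "measurable \<pi> N = measurable (Rd d \<Otimes>\<^sub>M Rd d) N" for N :: "'z measure"
    by (rule measurable_cong_sets[OF S]) simp
  show F: "fst \<in> measurable \<pi> (Rd d)" unfolding MC by (rule measurable_fst)
  show Sn: "snd \<in> measurable \<pi> (Rd d)" unfolding MC by (rule measurable_snd)
  show "(\<lambda>p. vdist d (fst p) (snd p)) \<in> borel_measurable \<pi>" unfolding MC by (rule vdist_meas)
  have "AE y in distr \<pi> (Rd d) fst. vnorm d y \<le> R" unfolding D1 by (rule supp_facts(4)[OF m])
  then have a1: "AE p in \<pi>. vnorm d (fst p) \<le> R"
    by (subst (asm) AE_distr_iff[OF F ball_sets])
  have "AE y in distr \<pi> (Rd d) snd. vnorm d y \<le> R" unfolding D2 by (rule supp_facts(4)[OF m'])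
  then have a2: "AE p in \<pi>. vnorm d (snd p) \<le> R"
    by (subst (asm) AE_distr_iff[OF Sn ball_sets])
  show "AE p in \<pi>. vnorm d (fst p) \<le> R \<and> vnorm d (snd p) \<le> R"
    using a1 a2 by (rule eventually_conj)
  show "integral\<^sup>L \<mu> f = (\<integral>p. f (fst p) \<partial>\<pi>)" if "f \<in> borel_measurable (Rd d)" for f :: "(nat\<Rightarrow>real)\<Rightarrow>real"
    unfolding D1[symmetric] by (rule integral_distr[OF F that])
  show "integral\<^sup>L \<mu>' f = (\<integral>p. f (snd p) \<partial>\<pi>)" if "f \<in> borel_measurable (Rd d)" for f :: "(nat\<Rightarrow>real)\<Rightarrow>real"
    unfolding D2[symmetric] by (rule integral_distr[OF Sn that])
qed

lemma prod_coupling: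
  assumes m: "prob_supp d R \<mu>" and m': "prob_supp d R \<mu>'"
  shows "\<mu> \<Otimes>\<^sub>M \<mu>' \<in> couplings d \<mu> \<mu>'"
proof -
  have P: "prob_space \<mu>" "prob_space \<mu>'" using supp_facts m m' by auto
  have S: "sets \<mu> = sets (Rd d)" "sets \<mu>' = sets (Rd d)" using supp_facts m m' by auto
  have PP: "prob_space (\<mu> \<Otimes>\<^sub>M \<mu>')" by (rule prob_space_pair[OF P])
  have SS: "sets (\<mu> \<Otimes>\<^sub>M \<mu>') = sets (Rd d \<Otimes>\<^sub>M Rd d)" by (rule sets_pair_measure_cong[OF S])
  have "distr (\<mu> \<Otimes>\<^sub>M \<mu>') (Rd d) fst = distr (\<mu> \<Otimes>\<^sub>M \<mu>') \<mu> fst"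
    by (rule distr_cong) (use S in auto)
  also have "\<dots> = \<mu>" by (rule prob_space.distr_pair_fst[OF P(2)])
  finally have D1: "distr (\<mu> \<Otimes>\<^sub>M \<mu>') (Rd d) fst = \<mu>" .
  have "distr (\<mu> \<Otimes>\<^sub>M \<mu>') (Rd d) snd = distr (\<mu> \<Otimes>\<^sub>M \<mu>') \<mu>' snd"
    by (rule distr_cong) (use S in auto)
  also have "\<dots> = \<mu>'"
  proof (rule measure_eqI)
    show "sets (distr (\<mu> \<Otimes>\<^sub>M \<mu>') \<mu>' snd) = sets \<mu>'" by simp
    fix A assume "A \<in> sets (distr (\<mu> \<Otimes>\<^sub>M \<mu>') \<mu>' snd)"
    then have A: "A \<in> sets \<mu>'" by simp
    have "emeasure (distr (\<mu> \<Otimes>\<^sub>M \<mu>') \<mu>' snd) A = emeasure (\<mu> \<Otimes>\<^sub>M \<mu>') (snd -` A \<inter> space (\<mu> \<Otimes>\<^sub>M \<mu>'))"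
      by (rule emeasure_distr[OF measurable_snd A])
    also have "snd -` A \<inter> space (\<mu> \<Otimes>\<^sub>M \<mu>') = space \<mu> \<times> A"
      using sets.sets_into_space[OF A] by (auto simp: space_pair_measure)
    also have "emeasure (\<mu> \<Otimes>\<^sub>M \<mu>') (space \<mu> \<times> A) = emeasure \<mu> (space \<mu>) * emeasure \<mu>' A"
      by (rule sigma_finite_measure.emeasure_pair_measure_Times[OF prob_space_imp_sigma_finite[OF P(2)] sets.top A])
    also have "\<dots> = emeasure \<mu>' A" using prob_space.emeasure_space_1[OF P(1)] by simp
    finally show "emeasure (distr (\<mu> \<Otimes>\<^sub>M \<mu>') \<mu>' snd) A = emeasure \<mu>' A" .
  qed
  finally have D2: "distr (\<mu> \<Otimes>\<^sub>M \<mu>') (Rd d) snd = \<mu>'" .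
  show ?thesis unfolding couplings_def using PP SS D1 D2 by blast
qed

lemma cpl_vdist:
  assumes pi: "\<pi> \<in> couplings d \<mu> \<mu>'" and m: "prob_supp d R \<mu>" and m': "prob_supp d R \<mu>'"
  shows "integrable \<pi> (\<lambda>p. vdist d (fst p) (snd p))"
    "(\<integral>\<^sup>+ p. ennreal (vdist d (fst p) (snd p)) \<partial>\<pi>) = ennreal (\<integral>p. vdist d (fst p) (snd p) \<partial>\<pi>)"
    "(\<integral>p. vdist d (fst p) (snd p) \<partial>\<pi>) \<le> 2 * R"
proof -
  interpret prob_space \<pi> by (rule cpl_facts(1)[OF pi m m'])
  have ae: "AE p in \<pi>. vdist d (fst p) (snd p) \<le> 2 * R"
    using cpl_facts(5)[OF pi m m']
  proof (rule eventually_mono)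
    fix p assume "vnorm d (fst p) \<le> R \<and> vnorm d (snd p) \<le> R"
    then show "vdist d (fst p) (snd p) \<le> 2 * R" using vdist_le[of d "fst p" "snd p"] by linarith
  qed
  show I: "integrable \<pi> (\<lambda>p. vdist d (fst p) (snd p))"
  proof (rule integrable_const_bound[where B="2*R"])
    show "AE p in \<pi>. norm (vdist d (fst p) (snd p)) \<le> 2 * R" using ae by simp
    show "(\<lambda>p. vdist d (fst p) (snd p)) \<in> borel_measurable \<pi>" by (rule cpl_facts(4)[OF pi m m'])
  qed
  show "(\<integral>\<^sup>+ p. ennreal (vdist d (fst p) (snd p)) \<partial>\<pi>) = ennreal (\<integral>p. vdist d (fst p) (snd p) \<partial>\<pi>)"
    by (rule nn_integral_eq_integral[OF I]) simp
  have "(\<integral>p. vdist d (fst p) (snd p) \<partial>\<pi>) \<le> (\<integral>p. 2 * R \<partial>\<pi>)"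
    by (rule integral_mono_AE[OF I _ ae]) simp
  then show "(\<integral>p. vdist d (fst p) (snd p) \<partial>\<pi>) \<le> 2 * R" by (simp add: prob_space.prob_space[OF cpl_facts(1)[OF pi m m']])
qed

lemma W1_ge:
  fixes c L :: real
  assumes m: "prob_supp d R \<mu>" and m': "prob_supp d R \<mu>'" and L: "0 \<le> L"
    and H: "\<And>\<pi>. \<pi> \<in> couplings d \<mu> \<mu>' \<Longrightarrow> c \<le> L * (\<integral>p. vdist d (fst p) (snd p) \<partial>\<pi>)"
  shows "c \<le> L * W1 d \<mu> \<mu>'"
proof -
  define J where "J = (INF \<pi>\<in>couplings d \<mu> \<mu>'. \<integral>\<^sup>+ p. ennreal (vdist d (fst p) (snd p)) \<partial>\<pi>)"
  have W: "W1 d \<mu> \<mu>' = enn2real J" by (simp add: W1_def J_def)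
  have pc: "\<mu> \<Otimes>\<^sub>M \<mu>' \<in> couplings d \<mu> \<mu>'" by (rule prod_coupling[OF m m'])
  have "J \<le> (\<integral>\<^sup>+ p. ennreal (vdist d (fst p) (snd p)) \<partial>(\<mu> \<Otimes>\<^sub>M \<mu>'))"
    unfolding J_def by (rule INF_lower[OF pc])
  also have "\<dots> < \<top>" by (simp add: cpl_vdist(2)[OF pc m m'])
  finally have Jfin: "J < \<top>" .
  show ?thesis
  proof (cases "L = 0")
    case True
    then show ?thesis using H[OF pc] by simp
  next
    case False
    then have Lp: "0 < L" using L by simp
    have "ennreal (c / L) \<le> J" unfolding J_def
    proof (rule INF_greatest)
      fix \<pi> assume pi: "\<pi> \<in> couplings d \<mu> \<mu>'"
      have "c / L \<le> (\<integral>p. vdist d (fst p) (snd p) \<partial>\<pi>)"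
        using H[OF pi] Lp by (simp add: divide_le_eq mult.commute)
      then have "ennreal (c / L) \<le> ennreal (\<integral>p. vdist d (fst p) (snd p) \<partial>\<pi>)"
        by (rule ennreal_leI)
      then show "ennreal (c / L) \<le> (\<integral>\<^sup>+ p. ennreal (vdist d (fst p) (snd p)) \<partial>\<pi>)"
        by (simp add: cpl_vdist(2)[OF pi m m'])
    qed
    then have "enn2real (ennreal (c / L)) \<le> enn2real J" by (rule enn2real_mono[OF _ Jfin])
    then have "c / L \<le> enn2real J"
      by (cases "0 \<le> c / L") (auto intro: order_trans[OF _ enn2real_nonneg])
    then show ?thesis using Lp by (simp add: W divide_le_eq mult.commute)
  qed
qed

lemma intg_comp:
  fixes g :: "(nat \<Rightarrow> real) \<Rightarrow> 'i \<Rightarrow> real"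
  assumes m: "prob_supp d R \<mu>" and fin: "finite I"
    and meas: "\<And>k. (\<lambda>y. g y k) \<in> borel_measurable (Rd d)"
    and bd: "\<And>y. vnorm d y \<le> R \<Longrightarrow> L2_set (g y) I \<le> H"
    and k: "k \<in> I"
  shows "integrable \<mu> (\<lambda>y. g y k)"
  by (rule intg_supp[OF m meas, of k H]) (use abs_le_L2[OF fin k] bd order_trans in blast)

lemma int_bd:
  fixes g :: "(nat \<Rightarrow> real) \<Rightarrow> 'i \<Rightarrow> real"
  assumes m: "prob_supp d R \<mu>" and fin: "finite I"
    and meas: "\<And>k. (\<lambda>y. g y k) \<in> borel_measurable (Rd d)"
    and bd: "\<And>y. vnorm d y \<le> R \<Longrightarrow> L2_set (g y) I \<le> H"
  shows "L2_set (\<lambda>k. \<integral>y. g y k \<partial>\<mu>) I \<le> H"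
proof -
  interpret prob_space \<mu> using supp_facts(1)[OF m] .
  have "L2_set (\<lambda>k. \<integral>y. g y k \<partial>\<mu>) I \<le> (\<integral>y. H \<partial>\<mu>)"
  proof (rule mink[OF supp_facts(1)[OF m] fin])
    show "integrable \<mu> (\<lambda>y. g y k)" if "k \<in> I" for k by (rule intg_comp[OF m fin meas bd that])
    show "integrable \<mu> (\<lambda>y. H)" by simp
    show "AE y in \<mu>. L2_set (g y) I \<le> H"
      using supp_facts(4)[OF m] by (rule eventually_mono) (rule bd)
  qed
  then show ?thesis by (simp add: prob_space)
qed

lemma int_fix:
  fixes g g' :: "(nat \<Rightarrow> real) \<Rightarrow> 'i \<Rightarrow> real"
  assumes m: "prob_supp d R \<mu>" and fin: "finite I"
    and meas: "\<And>k. (\<lambda>y. g y k) \<in> borel_measurable (Rd d)"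
    and meas': "\<And>k. (\<lambda>y. g' y k) \<in> borel_measurable (Rd d)"
    and bd: "\<And>y. vnorm d y \<le> R \<Longrightarrow> L2_set (g y) I \<le> H"
    and bd': "\<And>y. vnorm d y \<le> R \<Longrightarrow> L2_set (g' y) I \<le> H"
    and del: "\<And>y. vnorm d y \<le> R \<Longrightarrow> L2_set (\<lambda>k. g y k - g' y k) I \<le> \<delta>"
  shows "L2_set (\<lambda>k. (\<integral>y. g y k \<partial>\<mu>) - (\<integral>y. g' y k \<partial>\<mu>)) I \<le> \<delta>"
proof -
  have "L2_set (\<lambda>k. (\<integral>y. g y k \<partial>\<mu>) - (\<integral>y. g' y k \<partial>\<mu>)) I = L2_set (\<lambda>k. \<integral>y. g y k - g' y k \<partial>\<mu>) I"
  proof (rule L2_set_cong[OF refl])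
    fix k assume k: "k \<in> I"
    show "(\<integral>y. g y k \<partial>\<mu>) - (\<integral>y. g' y k \<partial>\<mu>) = (\<integral>y. g y k - g' y k \<partial>\<mu>)"
      using Bochner_Integration.integral_diff[OF intg_comp[OF m fin meas bd k] intg_comp[OF m fin meas' bd' k]] by simp
  qed
  also have "\<dots> \<le> \<delta>"
    by (rule int_bd[OF m fin _ del]) (intro borel_measurable_diff meas meas')
  finally show ?thesis .
qed

lemma int_W1:
  fixes g :: "(nat \<Rightarrow> real) \<Rightarrow> 'i \<Rightarrow> real"
  assumes m: "prob_supp d R \<mu>" and m': "prob_supp d R \<mu>'" and fin: "finite I"
    and meas: "\<And>k. (\<lambda>y. g y k) \<in> borel_measurable (Rd d)"
    and bd: "\<And>y. vnorm d y \<le> R \<Longrightarrow> L2_set (g y) I \<le> H"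
    and lip: "\<And>y y'. vnorm d y \<le> R \<Longrightarrow> vnorm d y' \<le> R \<Longrightarrow> L2_set (\<lambda>k. g y k - g y' k) I \<le> Ly * vdist d y y'"
    and Ly: "0 \<le> Ly"
  shows "L2_set (\<lambda>k. (\<integral>y. g y k \<partial>\<mu>) - (\<integral>y. g y k \<partial>\<mu>')) I \<le> Ly * W1 d \<mu> \<mu>'"
proof (rule W1_ge[OF m m' Ly])
  fix \<pi> assume pi: "\<pi> \<in> couplings d \<mu> \<mu>'"
  interpret prob_space \<pi> by (rule cpl_facts(1)[OF pi m m'])
  have ae: "AE p in \<pi>. vnorm d (fst p) \<le> R \<and> vnorm d (snd p) \<le> R" by (rule cpl_facts(5)[OF pi m m'])
  have i1: "integrable \<pi> (\<lambda>p. g (fst p) k)" if k: "k \<in> I" for k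
  proof (rule integrable_const_bound[where B=H])
    show "AE p in \<pi>. norm (g (fst p) k) \<le> H" using ae
    proof (rule eventually_mono)
      fix p assume "vnorm d (fst p) \<le> R \<and> vnorm d (snd p) \<le> R"
      then show "norm (g (fst p) k) \<le> H" using abs_le_L2[OF fin k, of "g (fst p)"] bd[of "fst p"] by auto
    qed
    show "(\<lambda>p. g (fst p) k) \<in> borel_measurable \<pi>" by (rule measurable_compose[OF cpl_facts(2)[OF pi m m'] meas])
  qed
  have i2: "integrable \<pi> (\<lambda>p. g (snd p) k)" if k: "k \<in> I" for k
  proof (rule integrable_const_bound[where B=H])
    show "AE p in \<pi>. norm (g (snd p) k) \<le> H" using ae
    proof (rule eventually_mono)
      fix p assume "vnorm d (fst p) \<le> R \<and> vnorm d (snd p) \<le> R"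
      then show "norm (g (snd p) k) \<le> H" using abs_le_L2[OF fin k, of "g (snd p)"] bd[of "snd p"] by auto
    qed
    show "(\<lambda>p. g (snd p) k) \<in> borel_measurable \<pi>" by (rule measurable_compose[OF cpl_facts(3)[OF pi m m'] meas])
  qed
  have "L2_set (\<lambda>k. (\<integral>y. g y k \<partial>\<mu>) - (\<integral>y. g y k \<partial>\<mu>')) I
      = L2_set (\<lambda>k. \<integral>p. g (fst p) k - g (snd p) k \<partial>\<pi>) I"
  proof (rule L2_set_cong[OF refl])
    fix k assume k: "k \<in> I"
    have "(\<integral>y. g y k \<partial>\<mu>) = (\<integral>p. g (fst p) k \<partial>\<pi>)" by (rule cpl_facts(6)[OF pi m m' meas])
    moreover have "(\<integral>y. g y k \<partial>\<mu>') = (\<integral>p. g (snd p) k \<partial>\<pi>)" by (rule cpl_facts(7)[OF pi m m' meas])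
    moreover have "(\<integral>p. g (fst p) k - g (snd p) k \<partial>\<pi>) = (\<integral>p. g (fst p) k \<partial>\<pi>) - (\<integral>p. g (snd p) k \<partial>\<pi>)"
      by (rule Bochner_Integration.integral_diff[OF i1[OF k] i2[OF k]])
    ultimately show "(\<integral>y. g y k \<partial>\<mu>) - (\<integral>y. g y k \<partial>\<mu>') = (\<integral>p. g (fst p) k - g (snd p) k \<partial>\<pi>)" by simp
  qed
  also have "\<dots> \<le> (\<integral>p. Ly * vdist d (fst p) (snd p) \<partial>\<pi>)"
  proof (rule mink[OF cpl_facts(1)[OF pi m m'] fin])
    show "integrable \<pi> (\<lambda>p. g (fst p) k - g (snd p) k)" if "k \<in> I" for k
      by (rule Bochner_Integration.integrable_diff[OF i1[OF that] i2[OF that]])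
    show "integrable \<pi> (\<lambda>p. Ly * vdist d (fst p) (snd p))"
      by (rule integrable_mult_right) (rule cpl_vdist(1)[OF pi m m'])
    show "AE p in \<pi>. L2_set (\<lambda>k. g (fst p) k - g (snd p) k) I \<le> Ly * vdist d (fst p) (snd p)"
      using ae by (rule eventually_mono) (rule lip; simp)
  qed
  also have "\<dots> = Ly * (\<integral>p. vdist d (fst p) (snd p) \<partial>\<pi>)" by simp
  finally show "L2_set (\<lambda>k. (\<integral>y. g y k \<partial>\<mu>) - (\<integral>y. g y k \<partial>\<mu>')) I \<le> Ly * (\<integral>p. vdist d (fst p) (snd p) \<partial>\<pi>)" .
qed

lemma int_lip:
  fixes g g' :: "(nat \<Rightarrow> real) \<Rightarrow> 'i \<Rightarrow> real"
  assumes m: "prob_supp d R \<mu>" and m': "prob_supp d R \<mu>'" and fin: "finite I"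
    and meas: "\<And>k. (\<lambda>y. g y k) \<in> borel_measurable (Rd d)"
    and meas': "\<And>k. (\<lambda>y. g' y k) \<in> borel_measurable (Rd d)"
    and bd: "\<And>y. vnorm d y \<le> R \<Longrightarrow> L2_set (g y) I \<le> H"
    and bd': "\<And>y. vnorm d y \<le> R \<Longrightarrow> L2_set (g' y) I \<le> H"
    and lip: "\<And>y y'. vnorm d y \<le> R \<Longrightarrow> vnorm d y' \<le> R \<Longrightarrow> L2_set (\<lambda>k. g y k - g y' k) I \<le> Ly * vdist d y y'"
    and Ly: "0 \<le> Ly"
    and del: "\<And>y. vnorm d y \<le> R \<Longrightarrow> L2_set (\<lambda>k. g y k - g' y k) I \<le> \<delta>"
  shows "L2_set (\<lambda>k. (\<integral>y. g y k \<partial>\<mu>) - (\<integral>y. g' y k \<partial>\<mu>')) I \<le> Ly * W1 d \<mu> \<mu>' + \<delta>"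
proof -
  have "L2_set (\<lambda>k. (\<integral>y. g y k \<partial>\<mu>) - (\<integral>y. g' y k \<partial>\<mu>')) I
    = L2_set (\<lambda>k. ((\<integral>y. g y k \<partial>\<mu>) - (\<integral>y. g y k \<partial>\<mu>')) + ((\<integral>y. g y k \<partial>\<mu>') - (\<integral>y. g' y k \<partial>\<mu>'))) I"
    by (rule L2_set_cong) auto
  also have "\<dots> \<le> L2_set (\<lambda>k. (\<integral>y. g y k \<partial>\<mu>) - (\<integral>y. g y k \<partial>\<mu>')) I
       + L2_set (\<lambda>k. (\<integral>y. g y k \<partial>\<mu>') - (\<integral>y. g' y k \<partial>\<mu>')) I"
    by (rule L2_set_triangle_ineq)
  also have "\<dots> \<le> Ly * W1 d \<mu> \<mu>' + \<delta>"
    by (rule add_mono[OF int_W1[OF m m' fin meas bd lip Ly] int_fix[OF m' fin meas meas' bd bd' del]])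
  finally show ?thesis .
qed

lemma exp_rem:
  fixes u :: real
  assumes "\<bar>u\<bar> \<le> 1"
  shows "\<bar>exp u - 1 - u\<bar> \<le> u\<^sup>2"
proof (cases "0 \<le> u")
  case True
  have "exp u \<le> 1 + u + u\<^sup>2" by (rule exp_bound) (use True assms in auto)
  moreover have "1 + u \<le> exp u" by (rule exp_ge_add_one_self)
  ultimately show ?thesis unfolding abs_le_iff by linarith
next
  case False
  define v where "v = - u"
  have v: "0 < v" "v \<le> 1" using False assms by (auto simp: v_def)
  have "1 + v \<le> exp v" by (rule exp_ge_add_one_self)
  then have "exp u \<le> 1 / (1 + v)" using v
    by (simp add: v_def exp_minus field_simps)
  also have "1 / (1 + v) \<le> 1 - v + v\<^sup>2"
  proof -
    have "1 \<le> (1 - v + v\<^sup>2) * (1 + v)" using v by (simp add: algebra_simps power2_eq_square power3_eq_cube)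
    then show ?thesis using v by (simp add: divide_le_eq)
  qed
  finally have "exp u \<le> 1 + u + u\<^sup>2" by (simp add: v_def)
  moreover have "1 + u \<le> exp u" by (rule exp_ge_add_one_self)
  ultimately show ?thesis unfolding abs_le_iff by linarith
qed

lemma deriv_int:
  fixes g c :: "'a \<Rightarrow> real"
  assumes P: "prob_space N" and mg: "g \<in> borel_measurable N" and mc: "c \<in> borel_measurable N"
    and cb: "AE y in N. \<bar>c y\<bar> \<le> Cb" and gb: "AE y in N. \<bar>g y\<bar> \<le> G" and Cb: "0 \<le> Cb"
  shows "((\<lambda>s. \<integral>y. g y * exp (s * c y) \<partial>N) has_real_derivative (\<integral>y. c y * g y \<partial>N)) (at 0)"
proof -
  interpret prob_space N by (rule P)
  have "AE y in N. 0 \<le> G" using gb by (rule eventually_mono) (rule order_trans[OF abs_ge_zero])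
  then have G: "0 \<le> G" by simp
  have ig: "integrable N (\<lambda>y. g y * exp (s * c y))" for s
  proof (rule integrable_const_bound[where B="G * exp (\<bar>s\<bar> * Cb)"])
    show "AE y in N. norm (g y * exp (s * c y)) \<le> G * exp (\<bar>s\<bar> * Cb)"
      using cb gb
    proof eventually_elim
      case (elim y)
      have "s * c y \<le> \<bar>s\<bar> * \<bar>c y\<bar>" using abs_ge_self[of "s * c y"] by (simp add: abs_mult)
      also have "\<dots> \<le> \<bar>s\<bar> * Cb" by (rule mult_left_mono[OF elim(1) abs_ge_zero])
      finally have "s * c y \<le> \<bar>s\<bar> * Cb" .
      then have "exp (s * c y) \<le> exp (\<bar>s\<bar> * Cb)" by simp
      then show ?case using elim(2) by (simp add: abs_mult) (intro mult_mono, auto)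
    qed
    show "(\<lambda>y. g y * exp (s * c y)) \<in> borel_measurable N"
      by (intro borel_measurable_times mg measurable_compose[OF _ borel_measurable_exp] borel_measurable_times measurable_const mc) simp
  qed
  have icg: "integrable N (\<lambda>y. c y * g y)"
  proof (rule integrable_const_bound[where B="Cb * G"])
    show "AE y in N. norm (c y * g y) \<le> Cb * G"
      using cb gb
    proof eventually_elim
      case (elim y)
      show ?case unfolding real_norm_def abs_mult by (rule mult_mono) (use elim Cb in auto)
    qed
    show "(\<lambda>y. c y * g y) \<in> borel_measurable N" by (intro borel_measurable_times mg mc)
  qed
  define F where "F s = (\<integral>y. g y * exp (s * c y) \<partial>N)" for s
  define D where "D = (\<integral>y. c y * g y \<partial>N)"
  have key: "\<bar>(F h - F 0) / h - D\<bar> \<le> G * Cb\<^sup>2 * \<bar>h\<bar>" if h: "h \<noteq> 0" "\<bar>h\<bar> * Cb \<le> 1" for h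
  proof -
    have "F h - F 0 - h * D = (\<integral>y. g y * (exp (h * c y) - 1 - h * c y) \<partial>N)"
    proof -
      have "F h - F 0 - h * D = (\<integral>y. g y * exp (h * c y) \<partial>N) - (\<integral>y. g y \<partial>N) - (\<integral>y. h * (c y * g y) \<partial>N)"
        using ig[of 0] by (simp add: F_def D_def)
      also have "\<dots> = (\<integral>y. g y * exp (h * c y) - g y - h * (c y * g y) \<partial>N)"
      proof -
        have i0: "integrable N g" using ig[of 0] by simp
        have i1: "integrable N (\<lambda>y. h * (c y * g y))" using icg by simp
        have "(\<integral>y. g y * exp (h * c y) - g y - h * (c y * g y) \<partial>N)
            = (\<integral>y. g y * exp (h * c y) - g y \<partial>N) - (\<integral>y. h * (c y * g y) \<partial>N)"
          by (rule Bochner_Integration.integral_diff[OF Bochner_Integration.integrable_diff[OF ig[of h] i0] i1])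
        also have "(\<integral>y. g y * exp (h * c y) - g y \<partial>N) = (\<integral>y. g y * exp (h * c y) \<partial>N) - (\<integral>y. g y \<partial>N)"
          by (rule Bochner_Integration.integral_diff[OF ig[of h] i0])
        finally show ?thesis by simp
      qed
      also have "\<dots> = (\<integral>y. g y * (exp (h * c y) - 1 - h * c y) \<partial>N)"
        by (rule Bochner_Integration.integral_cong) (simp_all add: algebra_simps)
      finally show ?thesis .
    qed
    also have "\<bar>\<dots>\<bar> \<le> (\<integral>y. \<bar>g y * (exp (h * c y) - 1 - h * c y)\<bar> \<partial>N)"
      by (rule integral_abs_bound)
    also have "\<dots> \<le> (\<integral>y. G * (h\<^sup>2 * Cb\<^sup>2) \<partial>N)"
    proof (rule integral_mono_AE')
      show "AE y in N. 0 \<le> G * (h\<^sup>2 * Cb\<^sup>2)" using G by simp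
      show "integrable N (\<lambda>y. G * (h\<^sup>2 * Cb\<^sup>2))" by simp
      show "AE y in N. \<bar>g y * (exp (h * c y) - 1 - h * c y)\<bar> \<le> G * (h\<^sup>2 * Cb\<^sup>2)"
        using cb gb
      proof eventually_elim
        case (elim y)
        have hc: "\<bar>h * c y\<bar> \<le> \<bar>h\<bar> * Cb" unfolding abs_mult by (rule mult_left_mono[OF elim(1) abs_ge_zero])
        then have "\<bar>h * c y\<bar> \<le> 1" using h by linarith
        then have "\<bar>exp (h * c y) - 1 - h * c y\<bar> \<le> (h * c y)\<^sup>2" by (rule exp_rem)
        also have "\<dots> = \<bar>h * c y\<bar>\<^sup>2" by simp
        also have "\<dots> \<le> (\<bar>h\<bar> * Cb)\<^sup>2" using hc by (intro power_mono) auto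
        also have "\<dots> = h\<^sup>2 * Cb\<^sup>2" by (simp add: power_mult_distrib)
        finally have e: "\<bar>exp (h * c y) - 1 - h * c y\<bar> \<le> h\<^sup>2 * Cb\<^sup>2" .
        show ?case using elim(2) e by (simp add: abs_mult) (intro mult_mono, auto)
      qed
    qed
    also have "\<dots> = G * (h\<^sup>2 * Cb\<^sup>2)" by (simp add: prob_space)
    finally have b: "\<bar>F h - F 0 - h * D\<bar> \<le> G * (h\<^sup>2 * Cb\<^sup>2)" .
    have "(F h - F 0) / h - D = (F h - F 0 - h * D) / h" using h by (simp add: field_simps)
    then have "\<bar>(F h - F 0) / h - D\<bar> = \<bar>F h - F 0 - h * D\<bar> / \<bar>h\<bar>" by simp
    also have "\<dots> \<le> G * (h\<^sup>2 * Cb\<^sup>2) / \<bar>h\<bar>" using b h by (intro divide_right_mono) auto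
    also have "\<dots> = G * Cb\<^sup>2 * \<bar>h\<bar>" using h by (simp add: power2_eq_square field_simps)
    finally show ?thesis .
  qed
  have "((\<lambda>h. (F (0 + h) - F 0) / h - D) \<longlongrightarrow> 0) (at 0)"
  proof (rule Lim_null_comparison)
    show "\<forall>\<^sub>F h in at 0. norm ((F (0 + h) - F 0) / h - D) \<le> G * Cb\<^sup>2 * \<bar>h\<bar>"
      unfolding eventually_at
    proof (intro exI[of _ "1 / (Cb + 1)"] conjI allI impI ballI)
      show "0 < 1 / (Cb + 1)" using Cb by simp
      fix h :: real assume "h \<in> UNIV" "h \<noteq> 0 \<and> dist h 0 < 1 / (Cb + 1)"
      then have h0: "h \<noteq> 0" and hl: "\<bar>h\<bar> < 1 / (Cb + 1)" by auto
      have "\<bar>h\<bar> * Cb \<le> \<bar>h\<bar> * (Cb + 1)" by (rule mult_left_mono) auto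
      also have "\<dots> \<le> 1" using hl Cb by (simp add: less_divide_eq mult.commute)
      finally show "norm ((F (0 + h) - F 0) / h - D) \<le> G * Cb\<^sup>2 * \<bar>h\<bar>" using key[OF h0] by simp
    qed
    show "((\<lambda>h. G * Cb\<^sup>2 * \<bar>h\<bar>) \<longlongrightarrow> 0) (at 0)"
      by (intro tendsto_eq_intros) auto
  qed
  then have "((\<lambda>h. (F (0 + h) - F 0) / h) \<longlongrightarrow> D) (at 0)" by (rule LIM_zero_cancel)
  then have "(F has_real_derivative D) (at 0)" by (simp add: DERIV_def)
  then show ?thesis unfolding F_def[abs_def] D_def .
qed


lemma mvmul_upd:
  assumes "i < d" "j < d"
  shows "mvmul d A (x(j := t)) i = mvmul d A x i + A i j * (t - x j)"
proof -
  have "(\<Sum>k<d. A i k * (x(j := t)) k) = (\<Sum>k<d. A i k * x k + (if k = j then A i j * (t - x j) else 0))"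
    by (rule sum.cong) (auto simp: algebra_simps)
  also have "\<dots> = (\<Sum>k<d. A i k * x k) + A i j * (t - x j)"
    using assms by (simp add: sum.distrib)
  finally show ?thesis using assms by (simp add: mvmul_def)
qed

lemma sum_lin: "(\<Sum>i<d. (a i + q i * s) * k i) = (\<Sum>i<d. a i * k i) + s * (\<Sum>i<d. q i * k i)"
  for a q k :: "nat \<Rightarrow> real"
proof -
  have "(\<Sum>i<d. (a i + q i * s) * k i) = (\<Sum>i<d. a i * k i + s * (q i * k i))"
    by (rule sum.cong) (simp_all add: algebra_simps)
  also have "\<dots> = (\<Sum>i<d. a i * k i) + s * (\<Sum>i<d. q i * k i)"
    by (simp add: sum.distrib sum_distrib_left)
  finally show ?thesis .
qed

lemma sc_upd:
  assumes "j < d"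
  shows "sc d \<theta> (x(j := t)) y = sc d \<theta> x y + (t - x j) * cc d \<theta> y j"
proof -
  have "sc d \<theta> (x(j := t)) y = (\<Sum>i<d. (mvmul d (qm \<theta>) x i + qm \<theta> i j * (t - x j)) * mvmul d (km \<theta>) y i)"
    unfolding sc_def vinner_def by (rule sum.cong) (use assms in \<open>auto simp: mvmul_upd\<close>)
  also have "\<dots> = (\<Sum>i<d. mvmul d (qm \<theta>) x i * mvmul d (km \<theta>) y i) + (t - x j) * (\<Sum>i<d. qm \<theta> i j * mvmul d (km \<theta>) y i)"
    by (rule sum_lin)
  also have "(\<Sum>i<d. qm \<theta> i j * mvmul d (km \<theta>) y i) = cc d \<theta> y j"
    using assms by (simp add: cc_def mvmul_def)
  finally show ?thesis by (simp only: sc_def vinner_def)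
qed

lemma attn_eq:
  assumes "i < d"
  shows "attn d x \<mu> \<theta> i = (\<integral>y. wts d \<theta> x y * vv d \<theta> y i \<partial>\<mu>) / (\<integral>y. wts d \<theta> x y \<partial>\<mu>)"
  using assms by (cases \<theta>) (simp add: attn_def wts_def sc_def vv_def qm_def km_def vm_def)

lemma wts_upd:
  assumes "j < d"
  shows "wts d \<theta> (x(j := t)) y = wts d \<theta> x y * exp ((t - x j) * cc d \<theta> y j)"
  using assms by (simp add: wts_def sc_upd exp_add)

lemma adm_self: "adm d M R \<theta> x y \<Longrightarrow> adm d M R \<theta> x y" .

lemma DxV_eq:
  assumes m: "prob_supp d R \<mu>" and th: "pnorm d \<theta> \<le> M" and xR: "vnorm d x \<le> R"
    and i: "i < d" and j: "j < d"
  shows "DxV d x \<mu> \<theta> i j = (\<integral>y. hC d \<theta> x y (i, j) \<partial>\<mu>) / (\<integral>y. hZ d \<theta> x y () \<partial>\<mu>)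
      - ((\<integral>y. hA d \<theta> x y i \<partial>\<mu>) / (\<integral>y. hZ d \<theta> x y () \<partial>\<mu>)) * ((\<integral>y. hB d \<theta> x y j \<partial>\<mu>) / (\<integral>y. hZ d \<theta> x y () \<partial>\<mu>))"
    and "(\<integral>y. hZ d \<theta> x y () \<partial>\<mu>) \<ge> 1 / EE M R"
proof -
  have P: "prob_space \<mu>" by (rule supp_facts(1)[OF m])
  interpret prob_space \<mu> by (rule P)
  have ae: "AE y in \<mu>. vnorm d y \<le> R" by (rule supp_facts(4)[OF m])
  have A: "adm d M R \<theta> x y" if "vnorm d y \<le> R" for y using th xR that by (simp add: adm_def)
  define g1 where "g1 y = wts d \<theta> x y * vv d \<theta> y i" for y
  define g0 where "g0 y = wts d \<theta> x y" for y
  define c where "c y = cc d \<theta> y j" for y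
  have mg1: "g1 \<in> borel_measurable \<mu>" unfolding g1_def
    by (rule meas_supp[OF m]) (intro borel_measurable_times wts_meas vv_meas)
  have mg0: "g0 \<in> borel_measurable \<mu>" unfolding g0_def by (rule meas_supp[OF m]) (rule wts_meas)
  have mc: "c \<in> borel_measurable \<mu>" unfolding c_def by (rule meas_supp[OF m]) (rule cc_meas)
  have cb: "AE y in \<mu>. \<bar>c y\<bar> \<le> M * (M * R)" using ae
  proof (rule eventually_mono)
    fix y assume "vnorm d y \<le> R"
    then have "vnorm d (cc d \<theta> y) \<le> M * (M * R)" using Cy(1)[OF A A] by blast
    moreover have "\<bar>cc d \<theta> y j\<bar> \<le> vnorm d (cc d \<theta> y)" unfolding vnorm_L2 by (rule abs_le_L2) (use j in auto)
    ultimately show "\<bar>c y\<bar> \<le> M * (M * R)" unfolding c_def by linarith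
  qed
  have g1b: "AE y in \<mu>. \<bar>g1 y\<bar> \<le> EE M R * (M * R)" using ae
  proof (rule eventually_mono)
    fix y assume "vnorm d y \<le> R"
    then have "L2_set (hA d \<theta> x y) {..<d} \<le> EE M R * (M * R)" using hA_bd[OF A A] by blast
    moreover have "\<bar>hA d \<theta> x y i\<bar> \<le> L2_set (hA d \<theta> x y) {..<d}" by (rule abs_le_L2) (use i in auto)
    ultimately show "\<bar>g1 y\<bar> \<le> EE M R * (M * R)" unfolding g1_def hA_def by linarith
  qed
  have g0b: "AE y in \<mu>. \<bar>g0 y\<bar> \<le> EE M R" using ae
  proof (rule eventually_mono)
    fix y assume "vnorm d y \<le> R"
    then have "0 < wts d \<theta> x y" "wts d \<theta> x y \<le> EE M R" using wf_bd[OF A A] by blast+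
    then show "\<bar>g0 y\<bar> \<le> EE M R" unfolding g0_def by simp
  qed
  have MR: "0 \<le> M" "0 \<le> R" using MR_nonneg[OF A[OF xR] A[OF xR]] by auto
  have Cb: "0 \<le> M * (M * R)" using MR by simp
  define F1 where "F1 s = (\<integral>y. g1 y * exp (s * c y) \<partial>\<mu>)" for s
  define F0 where "F0 s = (\<integral>y. g0 y * exp (s * c y) \<partial>\<mu>)" for s
  have d1: "(F1 has_real_derivative (\<integral>y. c y * g1 y \<partial>\<mu>)) (at 0)"
    unfolding F1_def[abs_def] by (rule deriv_int[OF P mg1 mc cb g1b Cb])
  have d0: "(F0 has_real_derivative (\<integral>y. c y * g0 y \<partial>\<mu>)) (at 0)"
    unfolding F0_def[abs_def] by (rule deriv_int[OF P mg0 mc cb g0b Cb])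
  have sh: "((\<lambda>t. t - x j) has_real_derivative 1) (at (x j))"
    by (auto intro!: derivative_eq_intros)
  have "DERIV F1 ((\<lambda>t. t - x j) (x j)) :> (\<integral>y. c y * g1 y \<partial>\<mu>)" using d1 by simp
  from DERIV_chain[OF this sh]
  have d1': "((\<lambda>t. F1 (t - x j)) has_real_derivative (\<integral>y. c y * g1 y \<partial>\<mu>)) (at (x j))"
    by (simp add: o_def)
  have "DERIV F0 ((\<lambda>t. t - x j) (x j)) :> (\<integral>y. c y * g0 y \<partial>\<mu>)" using d0 by simp
  from DERIV_chain[OF this sh]
  have d0': "((\<lambda>t. F0 (t - x j)) has_real_derivative (\<integral>y. c y * g0 y \<partial>\<mu>)) (at (x j))"
    by (simp add: o_def)
  have ig0: "integrable \<mu> g0"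
    by (rule integrable_const_bound[where B="EE M R"]) (use g0b mg0 in auto)
  have lb: "AE y in \<mu>. 1 / EE M R \<le> g0 y" using ae
  proof (rule eventually_mono)
    fix y assume yR: "vnorm d y \<le> R"
    have "\<bar>sc d \<theta> x y\<bar> \<le> (M * R) * (M * R)" by (rule sc_bd(1)[OF A[OF yR] A[OF yR]])
    then have "- ((M * R) * (M * R)) \<le> sc d \<theta> x y" by linarith
    then have "exp (- ((M * R) * (M * R))) \<le> g0 y" by (simp add: g0_def wts_def)
    then show "1 / EE M R \<le> g0 y" by (simp add: EE_def exp_minus inverse_eq_divide)
  qed
  have "(\<integral>y. 1 / EE M R \<partial>\<mu>) \<le> (\<integral>y. g0 y \<partial>\<mu>)"
    by (rule integral_mono_AE[OF _ ig0 lb]) simp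
  then have Zlb: "1 / EE M R \<le> (\<integral>y. g0 y \<partial>\<mu>)" by (simp add: prob_space)
  have EEp: "0 < EE M R" by (simp add: EE_def)
  have F00: "F0 (x j - x j) \<noteq> 0" using Zlb EEp unfolding F0_def
    by (auto simp: divide_le_eq)
  have dq: "((\<lambda>t. F1 (t - x j) / F0 (t - x j)) has_real_derivative
      ((\<integral>y. c y * g1 y \<partial>\<mu>) * F0 (x j - x j) - F1 (x j - x j) * (\<integral>y. c y * g0 y \<partial>\<mu>)) / (F0 (x j - x j) * F0 (x j - x j))) (at (x j))"
    by (rule DERIV_divide[OF d1' d0' F00])
  have feq: "(\<lambda>t. attn d (x(j := t)) \<mu> \<theta> i) = (\<lambda>t. F1 (t - x j) / F0 (t - x j))"
  proof
    fix t
    show "attn d (x(j := t)) \<mu> \<theta> i = F1 (t - x j) / F0 (t - x j)"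
      using i j by (simp add: attn_eq wts_upd F1_def F0_def g1_def g0_def c_def mult_ac)
  qed
  have "DxV d x \<mu> \<theta> i j = ((\<integral>y. c y * g1 y \<partial>\<mu>) * F0 0 - F1 0 * (\<integral>y. c y * g0 y \<partial>\<mu>)) / (F0 0 * F0 0)"
    unfolding DxV_def feq using DERIV_imp_deriv[OF dq] by simp
  also have "\<dots> = (\<integral>y. c y * g1 y \<partial>\<mu>) / F0 0 - (F1 0 / F0 0) * ((\<integral>y. c y * g0 y \<partial>\<mu>) / F0 0)"
    using F00 by (simp add: field_simps)
  also have "F0 0 = (\<integral>y. hZ d \<theta> x y () \<partial>\<mu>)" by (simp add: F0_def hZ_def g0_def)
  also have "F1 0 = (\<integral>y. hA d \<theta> x y i \<partial>\<mu>)" by (simp add: F1_def hA_def g1_def)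
  also have "(\<integral>y. c y * g1 y \<partial>\<mu>) = (\<integral>y. hC d \<theta> x y (i, j) \<partial>\<mu>)" by (simp add: hC_def c_def g1_def mult_ac)
  also have "(\<integral>y. c y * g0 y \<partial>\<mu>) = (\<integral>y. hB d \<theta> x y j \<partial>\<mu>)" by (simp add: hB_def c_def g0_def mult_ac)
  finally show "DxV d x \<mu> \<theta> i j = (\<integral>y. hC d \<theta> x y (i, j) \<partial>\<mu>) / (\<integral>y. hZ d \<theta> x y () \<partial>\<mu>)
      - ((\<integral>y. hA d \<theta> x y i \<partial>\<mu>) / (\<integral>y. hZ d \<theta> x y () \<partial>\<mu>)) * ((\<integral>y. hB d \<theta> x y j \<partial>\<mu>) / (\<integral>y. hZ d \<theta> x y () \<partial>\<mu>))" .
  show "(\<integral>y. hZ d \<theta> x y () \<partial>\<mu>) \<ge> 1 / EE M R" using Zlb by (simp add: hZ_def g0_def)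
qed

lemma vdist_self[simp]: "vdist d y y = 0" by (simp add: vdist_def)
lemma pdist_self[simp]: "pdist d \<theta> \<theta> = 0" by (cases \<theta>) (simp add: pdist_def)

lemma int_apply:
  fixes h :: "nat \<Rightarrow> params \<Rightarrow> (nat \<Rightarrow> real) \<Rightarrow> (nat \<Rightarrow> real) \<Rightarrow> 'i \<Rightarrow> real"
  assumes m: "prob_supp d R \<mu>" and m': "prob_supp d R \<mu>'" and fin: "finite I"
    and meas: "\<And>\<theta> x k. (\<lambda>y. h d \<theta> x y k) \<in> borel_measurable (Rd d)"
    and bd: "\<And>\<theta> x y. adm d M R \<theta> x y \<Longrightarrow> L2_set (h d \<theta> x y) I \<le> H"
    and lip: "\<And>\<theta> \<theta>' x x' y y'. adm d M R \<theta> x y \<Longrightarrow> adm d M R \<theta>' x' y' \<Longrightarrow>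
       L2_set (\<lambda>k. h d \<theta> x y k - h d \<theta>' x' y' k) I \<le> K * Dl d \<theta> \<theta>' x x' y y'"
    and K: "0 \<le> K"
    and th: "pnorm d \<theta> \<le> M" and th': "pnorm d \<theta>' \<le> M" and xR: "vnorm d x \<le> R" and xR': "vnorm d x' \<le> R"
  shows "L2_set (\<lambda>k. (\<integral>y. h d \<theta> x y k \<partial>\<mu>) - (\<integral>y. h d \<theta>' x' y k \<partial>\<mu>')) I
           \<le> K * (vdist d x x' + W1 d \<mu> \<mu>' + pdist d \<theta> \<theta>')"
    and "L2_set (\<lambda>k. \<integral>y. h d \<theta> x y k \<partial>\<mu>) I \<le> H"
proof -
  have A: "adm d M R \<theta> x y" if "vnorm d y \<le> R" for y using th xR that by (simp add: adm_def)
  have A': "adm d M R \<theta>' x' y" if "vnorm d y \<le> R" for y using th' xR' that by (simp add: adm_def)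
  have "L2_set (\<lambda>k. (\<integral>y. h d \<theta> x y k \<partial>\<mu>) - (\<integral>y. h d \<theta>' x' y k \<partial>\<mu>')) I
      \<le> K * W1 d \<mu> \<mu>' + K * (vdist d x x' + pdist d \<theta> \<theta>')"
  proof (rule int_lip[OF m m' fin meas meas])
    show "L2_set (h d \<theta> x y) I \<le> H" if "vnorm d y \<le> R" for y by (rule bd[OF A[OF that]])
    show "L2_set (h d \<theta>' x' y) I \<le> H" if "vnorm d y \<le> R" for y by (rule bd[OF A'[OF that]])
    show "L2_set (\<lambda>k. h d \<theta> x y k - h d \<theta> x y' k) I \<le> K * vdist d y y'"
      if "vnorm d y \<le> R" "vnorm d y' \<le> R" for y y'
      using lip[OF A[OF that(1)] A[OF that(2)]] by (simp add: Dl_def)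
    show "0 \<le> K" by (rule K)
    show "L2_set (\<lambda>k. h d \<theta> x y k - h d \<theta>' x' y k) I \<le> K * (vdist d x x' + pdist d \<theta> \<theta>')"
      if "vnorm d y \<le> R" for y
      using lip[OF A[OF that] A'[OF that]] by (simp add: Dl_def)
  qed
  then show "L2_set (\<lambda>k. (\<integral>y. h d \<theta> x y k \<partial>\<mu>) - (\<integral>y. h d \<theta>' x' y k \<partial>\<mu>')) I
           \<le> K * (vdist d x x' + W1 d \<mu> \<mu>' + pdist d \<theta> \<theta>')"
    by (simp add: algebra_simps)
  show "L2_set (\<lambda>k. \<integral>y. h d \<theta> x y k \<partial>\<mu>) I \<le> H"
    by (rule int_bd[OF m fin meas]) (rule bd[OF A])
qed

lemma ratio_bd:
  fixes X :: "'i \<Rightarrow> real"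
  assumes "0 < m" "m \<le> Z" "L2_set X I \<le> x0"
  shows "L2_set (\<lambda>k. X k / Z) I \<le> x0 / m"
proof -
  have "L2_set (\<lambda>k. X k / Z) I = \<bar>1 / Z\<bar> * L2_set X I" using L2_scal[of "1 / Z" X I] by simp
  also have "\<dots> = (1 / Z) * L2_set X I" using assms by simp
  also have "\<dots> \<le> (1 / m) * x0"
    using assms by (intro mult_mono) (auto simp: divide_simps)
  finally show ?thesis by simp
qed

lemma ratio_lip:
  fixes X X' :: "'i \<Rightarrow> real"
  assumes m: "0 < m" "m \<le> Z" "m \<le> Z'" and x: "L2_set X I \<le> x0" and x0: "0 \<le> x0"
    and z: "\<bar>Z - Z'\<bar> \<le> kz * dl" and xd: "L2_set (\<lambda>k. X k - X' k) I \<le> kx * dl" and D: "0 \<le> dl"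
  shows "L2_set (\<lambda>k. X k / Z - X' k / Z') I \<le> ((kz / (m * m)) * x0 + (1 / m) * kx) * dl"
proof -
  have Zp: "0 < Z" "0 < Z'" using m by auto
  have "L2_set (\<lambda>k. X k / Z - X' k / Z') I = L2_set (\<lambda>k. (1 / Z) * X k - (1 / Z') * X' k) I" by simp
  also have "\<dots> \<le> \<bar>1 / Z - 1 / Z'\<bar> * L2_set X I + \<bar>1 / Z'\<bar> * L2_set (\<lambda>k. X k - X' k) I"
    by (rule L2_scal_diff)
  also have "\<dots> \<le> ((kz / (m * m)) * x0 + (1 / m) * kx) * dl"
  proof (rule bilin)
    have "\<bar>1 / Z - 1 / Z'\<bar> = \<bar>Z - Z'\<bar> / (Z * Z')" using Zp by (simp add: field_simps abs_div)
    also have "\<dots> \<le> (kz * dl) / (m * m)"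
      using Zp m z by (intro frac_le mult_mono) auto
    finally show "\<bar>1 / Z - 1 / Z'\<bar> \<le> kz / (m * m) * dl" by simp
    show "\<bar>1 / Z'\<bar> \<le> 1 / m" using Zp m by (simp add: frac_le)
  qed (use x x0 xd D m in auto)
  finally show ?thesis .
qed

lemma opnorm_le_fro: "opnorm d A \<le> fro d A"
  unfolding opnorm_def
proof (rule cSup_least)
  have "(\<lambda>i\<in>{..<d}. 0::real) \<in> vecs d" by (simp add: vecs_def)
  moreover have "vnorm d (\<lambda>i\<in>{..<d}. 0::real) \<le> 1" by (simp add: vnorm_def)
  ultimately show "{vnorm d (mvmul d A v) |v. v \<in> vecs d \<and> vnorm d v \<le> 1} \<noteq> {}" by blast
  fix r assume "r \<in> {vnorm d (mvmul d A v) |v. v \<in> vecs d \<and> vnorm d v \<le> 1}"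
  then obtain v where r: "r = vnorm d (mvmul d A v)" and v: "vnorm d v \<le> 1" by blast
  have "r \<le> fro d A * vnorm d v" unfolding r by (rule mvmul_norm)
  also have "\<dots> \<le> fro d A * 1" using v by (intro mult_left_mono) auto
  finally show "r \<le> fro d A" by simp
qed

lemma Z_lb:
  assumes m: "prob_supp d R \<mu>" and th: "pnorm d \<theta> \<le> M" and xR: "vnorm d x \<le> R"
  shows "1 / EE M R \<le> (\<integral>y. hZ d \<theta> x y () \<partial>\<mu>)"
proof -
  interpret prob_space \<mu> by (rule supp_facts(1)[OF m])
  have ae: "AE y in \<mu>. vnorm d y \<le> R" by (rule supp_facts(4)[OF m])
  have A: "adm d M R \<theta> x y" if "vnorm d y \<le> R" for y using th xR that by (simp add: adm_def)
  define g0 where "g0 y = wts d \<theta> x y" for y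
  have mg0: "g0 \<in> borel_measurable \<mu>" unfolding g0_def by (rule meas_supp[OF m]) (rule wts_meas)
  have g0b: "AE y in \<mu>. \<bar>g0 y\<bar> \<le> EE M R" using ae
  proof (rule eventually_mono)
    fix y assume "vnorm d y \<le> R"
    then have "0 < wts d \<theta> x y" "wts d \<theta> x y \<le> EE M R" using wf_bd[OF A A] by blast+
    then show "\<bar>g0 y\<bar> \<le> EE M R" unfolding g0_def by simp
  qed
  have ig0: "integrable \<mu> g0"
    by (rule integrable_const_bound[where B="EE M R"]) (use g0b mg0 in auto)
  have lb: "AE y in \<mu>. 1 / EE M R \<le> g0 y" using ae
  proof (rule eventually_mono)
    fix y assume yR: "vnorm d y \<le> R"
    have "\<bar>sc d \<theta> x y\<bar> \<le> (M * R) * (M * R)" by (rule sc_bd(1)[OF A[OF yR] A[OF yR]])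
    then have "- ((M * R) * (M * R)) \<le> sc d \<theta> x y" by linarith
    then have "exp (- ((M * R) * (M * R))) \<le> g0 y" by (simp add: g0_def wts_def)
    then show "1 / EE M R \<le> g0 y" by (simp add: EE_def exp_minus inverse_eq_divide)
  qed
  have "(\<integral>y. 1 / EE M R \<partial>\<mu>) \<le> (\<integral>y. g0 y \<partial>\<mu>)"
    by (rule integral_mono_AE[OF _ ig0 lb]) simp
  then show ?thesis by (simp add: prob_space hZ_def g0_def)
qed

theorem propositionE3:
  fixes M R :: real
  shows "\<exists>L1::real. \<forall>(d::nat) x x' \<mu> \<mu>' \<theta> \<theta>'.
     x \<in> vecs d \<and> x' \<in> vecs d \<and> vnorm d x \<le> R \<and> vnorm d x' \<le> R \<and>
     prob_supp d R \<mu> \<and> prob_supp d R \<mu>' \<and> pnorm d \<theta> \<le> M \<and> pnorm d \<theta>' \<le> M \<longrightarrow>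
       opnorm d (DxV d x \<mu> \<theta>) \<le> L1 \<and>
       opnorm d (\<lambda>i j. DxV d x \<mu> \<theta> i j - DxV d x' \<mu>' \<theta>' i j)
         \<le> L1 * (vdist d x x' + W1 d \<mu> \<mu>' + pdist d \<theta> \<theta>')"
proof -
  define E where "E = EE M R"
  define m where "m = 1 / E"
  define kz where "kz = E * LS M R"
  define a0 where "a0 = E * (M * R)"
  define ka where "ka = (E * LS M R) * (M * R) + E * (R + M)"
  define b0 where "b0 = E * (M * (M * R))"
  define kb where "kb = (E * LS M R) * (M * (M * R)) + E * (M * R + M * (R + M))"
  define c0 where "c0 = E * ((M * R) * (M * (M * R)))"
  define kc where "kc = (E * LS M R) * ((M * R) * (M * (M * R))) + E * KO M R"
  define qa where "qa = (kz / (m * m)) * a0 + (1 / m) * ka"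
  define qb where "qb = (kz / (m * m)) * b0 + (1 / m) * kb"
  define qc where "qc = (kz / (m * m)) * c0 + (1 / m) * kc"
  define ra where "ra = a0 / m"
  define rb where "rb = b0 / m"
  define K where "K = qc + (qa * rb + ra * qb)"
  define Lb where "Lb = c0 / m + ra * rb"
  show ?thesis
  proof (rule exI[of _ "max Lb K"], intro allI impI)
    fix d x x' \<mu> \<mu>' \<theta> \<theta>'
    assume H: "x \<in> vecs d \<and> x' \<in> vecs d \<and> vnorm d x \<le> R \<and> vnorm d x' \<le> R \<and>
     prob_supp d R \<mu> \<and> prob_supp d R \<mu>' \<and> pnorm d \<theta> \<le> M \<and> pnorm d \<theta>' \<le> M"
    then have xR: "vnorm d x \<le> R" and xR': "vnorm d x' \<le> R" and mu: "prob_supp d R \<mu>"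
      and mu': "prob_supp d R \<mu>'" and th: "pnorm d \<theta> \<le> M" and th': "pnorm d \<theta>' \<le> M" by auto
    have Ax: "adm d M R \<theta> x x" using th xR by (simp add: adm_def)
    have MR: "0 \<le> M" "0 \<le> R" using MR_nonneg[OF Ax Ax] by auto
    have Ep: "0 < E" by (simp add: E_def EE_def)
    have mp: "0 < m" using Ep by (simp add: m_def)
    have LSp: "0 \<le> LS M R" using MR by (simp add: LS_def)
    have KOp: "0 \<le> KO M R" using MR by (simp add: KO_def)
    have nn: "0 \<le> kz" "0 \<le> a0" "0 \<le> ka" "0 \<le> b0" "0 \<le> kb" "0 \<le> c0" "0 \<le> kc"
      using MR Ep LSp KOp unfolding kz_def a0_def ka_def b0_def kb_def c0_def kc_def by simp_all
    have nn2: "0 \<le> qa" "0 \<le> qb" "0 \<le> qc" "0 \<le> ra" "0 \<le> rb"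
      using nn mp unfolding qa_def qb_def qc_def ra_def rb_def by simp_all
    define Dl0 where "Dl0 = vdist d x x' + W1 d \<mu> \<mu>' + pdist d \<theta> \<theta>'"
    have Dl0: "0 \<le> Dl0" by (simp add: Dl0_def W1_def)
    define Z where "Z = (\<integral>y. hZ d \<theta> x y () \<partial>\<mu>)"
    define Z' where "Z' = (\<integral>y. hZ d \<theta>' x' y () \<partial>\<mu>')"
    define A where "A i = (\<integral>y. hA d \<theta> x y i \<partial>\<mu>)" for i
    define A' where "A' i = (\<integral>y. hA d \<theta>' x' y i \<partial>\<mu>')" for i
    define B where "B i = (\<integral>y. hB d \<theta> x y i \<partial>\<mu>)" for i
    define B' where "B' i = (\<integral>y. hB d \<theta>' x' y i \<partial>\<mu>')" for i
    define C where "C k = (\<integral>y. hC d \<theta> x y k \<partial>\<mu>)" for k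
    define C' where "C' k = (\<integral>y. hC d \<theta>' x' y k \<partial>\<mu>')" for k
    have Zm: "m \<le> Z" unfolding Z_def m_def E_def by (rule Z_lb[OF mu th xR])
    have Zm': "m \<le> Z'" unfolding Z'_def m_def E_def by (rule Z_lb[OF mu' th' xR'])
    have bdZ: "L2_set (hZ d \<theta>0 x0 y0) {()} \<le> EE M R" if "adm d M R \<theta>0 x0 y0" for \<theta>0 x0 y0
      by (rule hZ_bd[OF that that])
    have bdA: "L2_set (hA d \<theta>0 x0 y0) {..<d} \<le> EE M R * (M * R)" if "adm d M R \<theta>0 x0 y0" for \<theta>0 x0 y0
      by (rule hA_bd[OF that that])
    have bdB: "L2_set (hB d \<theta>0 x0 y0) {..<d} \<le> EE M R * (M * (M * R))" if "adm d M R \<theta>0 x0 y0" for \<theta>0 x0 y0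
      by (rule hB_bd[OF that that])
    have bdC: "L2_set (hC d \<theta>0 x0 y0) ({..<d} \<times> {..<d}) \<le> EE M R * ((M * R) * (M * (M * R)))" if "adm d M R \<theta>0 x0 y0" for \<theta>0 x0 y0
      by (rule hC_bd[OF that that])
    have finU: "finite {()}" by simp
    have finD: "finite {..<d}" by simp
    have finD2: "finite ({..<d} \<times> {..<d})" by simp
    have kZ: "0 \<le> EE M R * LS M R" using LSp by (simp add: EE_def)
    have kA: "0 \<le> EE M R * LS M R * (M * R) + EE M R * (R + M)" using LSp MR by (simp add: EE_def)
    have kB: "0 \<le> EE M R * LS M R * (M * (M * R)) + EE M R * (M * R + M * (R + M))" using LSp MR by (simp add: EE_def)
    have kC: "0 \<le> EE M R * LS M R * (M * R * (M * (M * R))) + EE M R * KO M R" using LSp KOp MR by (simp add: EE_def)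
    have "L2_set (\<lambda>k. (\<integral>y. hZ d \<theta> x y k \<partial>\<mu>) - (\<integral>y. hZ d \<theta>' x' y k \<partial>\<mu>')) {()} \<le> kz * Dl0"
      unfolding kz_def E_def Dl0_def
      by (rule int_apply(1)[where h=hZ, OF mu mu' finU hZ_meas bdZ hZ_lip kZ th th' xR xR'])
    then have dZ: "\<bar>Z - Z'\<bar> \<le> kz * Dl0" by (simp add: L2_unit Z_def Z'_def)
    have dA: "L2_set (\<lambda>i. A i - A' i) {..<d} \<le> ka * Dl0"
      unfolding ka_def E_def Dl0_def A_def A'_def
      by (rule int_apply(1)[where h=hA, OF mu mu' finD hA_meas bdA hA_lip kA th th' xR xR'])
    have dB: "L2_set (\<lambda>i. B i - B' i) {..<d} \<le> kb * Dl0"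
      unfolding kb_def E_def Dl0_def B_def B'_def
      by (rule int_apply(1)[where h=hB, OF mu mu' finD hB_meas bdB hB_lip kB th th' xR xR'])
    have dC: "L2_set (\<lambda>k. C k - C' k) ({..<d} \<times> {..<d}) \<le> kc * Dl0"
      unfolding kc_def E_def Dl0_def C_def C'_def
      by (rule int_apply(1)[where h=hC, OF mu mu' finD2 hC_meas bdC hC_lip kC th th' xR xR'])
    have bA: "L2_set A {..<d} \<le> a0"
      unfolding a0_def E_def A_def
      by (rule int_apply(2)[where h=hA, OF mu mu' finD hA_meas bdA hA_lip kA th th' xR xR'])
    have bA': "L2_set A' {..<d} \<le> a0"
      unfolding a0_def E_def A'_def
      by (rule int_apply(2)[where h=hA, OF mu' mu finD hA_meas bdA hA_lip kA th' th xR' xR])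
    have bB: "L2_set B {..<d} \<le> b0"
      unfolding b0_def E_def B_def
      by (rule int_apply(2)[where h=hB, OF mu mu' finD hB_meas bdB hB_lip kB th th' xR xR'])
    have bB': "L2_set B' {..<d} \<le> b0"
      unfolding b0_def E_def B'_def
      by (rule int_apply(2)[where h=hB, OF mu' mu finD hB_meas bdB hB_lip kB th' th xR' xR])
    have bC: "L2_set C ({..<d} \<times> {..<d}) \<le> c0"
      unfolding c0_def E_def C_def
      by (rule int_apply(2)[where h=hC, OF mu mu' finD2 hC_meas bdC hC_lip kC th th' xR xR'])
    define Dm where "Dm k = C k / Z - (A (fst k) / Z) * (B (snd k) / Z)" for k
    define Dm' where "Dm' k = C' k / Z' - (A' (fst k) / Z') * (B' (snd k) / Z')" for k
    have DxE: "DxV d x \<mu> \<theta> i j = Dm (i, j)" if "i < d" "j < d" for i j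
      unfolding Dm_def A_def B_def C_def Z_def by (simp add: DxV_eq(1)[OF mu th xR that])
    have DxE': "DxV d x' \<mu>' \<theta>' i j = Dm' (i, j)" if "i < d" "j < d" for i j
      unfolding Dm'_def A'_def B'_def C'_def Z'_def by (simp add: DxV_eq(1)[OF mu' th' xR' that])
    have fro1: "fro d (DxV d x \<mu> \<theta>) = L2_set Dm ({..<d} \<times> {..<d})"
      unfolding fro_L2 by (rule L2_set_cong) (auto simp: DxE)
    have fro2: "fro d (\<lambda>i j. DxV d x \<mu> \<theta> i j - DxV d x' \<mu>' \<theta>' i j) = L2_set (\<lambda>k. Dm k - Dm' k) ({..<d} \<times> {..<d})"
      unfolding fro_L2 by (rule L2_set_cong) (auto simp: DxE DxE')
    have ba: "L2_set (\<lambda>i. A i / Z) {..<d} \<le> ra" unfolding ra_def by (rule ratio_bd[OF mp Zm bA])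
    have bb: "L2_set (\<lambda>i. B i / Z) {..<d} \<le> rb" unfolding rb_def by (rule ratio_bd[OF mp Zm bB])
    have ba': "L2_set (\<lambda>i. A' i / Z') {..<d} \<le> ra" unfolding ra_def by (rule ratio_bd[OF mp Zm' bA'])
    have bc: "L2_set (\<lambda>k. C k / Z) ({..<d} \<times> {..<d}) \<le> c0 / m" by (rule ratio_bd[OF mp Zm bC])
    have t1: "L2_set Dm ({..<d} \<times> {..<d}) \<le> L2_set (\<lambda>k. C k / Z) ({..<d} \<times> {..<d})
        + L2_set (\<lambda>k. (A (fst k) / Z) * (B (snd k) / Z)) ({..<d} \<times> {..<d})"
      unfolding Dm_def by (rule L2_diff_tri)
    have t2: "L2_set (\<lambda>k. (A (fst k) / Z) * (B (snd k) / Z)) ({..<d} \<times> {..<d})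
        = L2_set (\<lambda>i. A i / Z) {..<d} * L2_set (\<lambda>i. B i / Z) {..<d}"
      by (rule L2_outer'[where u="\<lambda>i. A i / Z" and v="\<lambda>i. B i / Z"])
    have t3: "L2_set (\<lambda>i. A i / Z) {..<d} * L2_set (\<lambda>i. B i / Z) {..<d} \<le> ra * rb"
      using ba bb nn2 by (intro mult_mono) auto
    have bound: "L2_set Dm ({..<d} \<times> {..<d}) \<le> Lb" unfolding Lb_def using t1 t2 t3 bc by linarith
    have qa: "L2_set (\<lambda>i. A i / Z - A' i / Z') {..<d} \<le> qa * Dl0"
      unfolding qa_def by (rule ratio_lip[OF mp Zm Zm' bA nn(2) dZ dA Dl0])
    have qb: "L2_set (\<lambda>i. B i / Z - B' i / Z') {..<d} \<le> qb * Dl0"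
      unfolding qb_def by (rule ratio_lip[OF mp Zm Zm' bB nn(4) dZ dB Dl0])
    have qc: "L2_set (\<lambda>k. C k / Z - C' k / Z') ({..<d} \<times> {..<d}) \<le> qc * Dl0"
      unfolding qc_def by (rule ratio_lip[OF mp Zm Zm' bC nn(6) dZ dC Dl0])
    have "L2_set (\<lambda>k. Dm k - Dm' k) ({..<d} \<times> {..<d})
       \<le> L2_set (\<lambda>k. C k / Z - C' k / Z') ({..<d} \<times> {..<d})
        + L2_set (\<lambda>k. (A (fst k) / Z) * (B (snd k) / Z) - (A' (fst k) / Z') * (B' (snd k) / Z')) ({..<d} \<times> {..<d})"
      unfolding Dm_def Dm'_def by (rule L2_diff_tri2)
    also have "L2_set (\<lambda>k. (A (fst k) / Z) * (B (snd k) / Z) - (A' (fst k) / Z') * (B' (snd k) / Z')) ({..<d} \<times> {..<d})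
      \<le> L2_set (\<lambda>i. A i / Z - A' i / Z') {..<d} * L2_set (\<lambda>i. B i / Z) {..<d}
        + L2_set (\<lambda>i. A' i / Z') {..<d} * L2_set (\<lambda>j. B j / Z - B' j / Z') {..<d}"
      by (rule L2_outer_diff'[where u="\<lambda>i. A i / Z" and v="\<lambda>i. B i / Z" and u'="\<lambda>i. A' i / Z'" and v'="\<lambda>i. B' i / Z'"])
    also have "\<dots> \<le> (qa * rb + ra * qb) * Dl0"
      by (rule bilin) (use qa qb ba' bb nn2 Dl0 in auto)
    finally have "L2_set (\<lambda>k. Dm k - Dm' k) ({..<d} \<times> {..<d}) \<le> qc * Dl0 + (qa * rb + ra * qb) * Dl0"
      using qc by linarith
    then have lipb: "L2_set (\<lambda>k. Dm k - Dm' k) ({..<d} \<times> {..<d}) \<le> K * Dl0"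
      unfolding K_def by (simp add: distrib_right)
    show "opnorm d (DxV d x \<mu> \<theta>) \<le> max Lb K \<and>
       opnorm d (\<lambda>i j. DxV d x \<mu> \<theta> i j - DxV d x' \<mu>' \<theta>' i j) \<le> max Lb K * (vdist d x x' + W1 d \<mu> \<mu>' + pdist d \<theta> \<theta>')"
    proof
      show "opnorm d (DxV d x \<mu> \<theta>) \<le> max Lb K"
        using opnorm_le_fro[of d "DxV d x \<mu> \<theta>"] fro1 bound by linarith
      have "K * Dl0 \<le> max Lb K * Dl0" using Dl0 by (intro mult_right_mono) auto
      then show "opnorm d (\<lambda>i j. DxV d x \<mu> \<theta> i j - DxV d x' \<mu>' \<theta>' i j) \<le> max Lb K * (vdist d x x' + W1 d \<mu> \<mu>' + pdist d \<theta> \<theta>')"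
        using opnorm_le_fro[of d "\<lambda>i j. DxV d x \<mu> \<theta> i j - DxV d x' \<mu>' \<theta>' i j"] fro2 lipb
        unfolding Dl0_def by linarith
    qed
  qed
qed

end
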